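(* The fertility map $\Phi\colon\mathcal{A}T\to\mathcal{A}M_{-1}$ is a morphism of pre-Lie-Rinehart algebras: its restriction $\Phi\colon\mathcal A\to S(M_0)$ is a unital algebra morphism, and for all $X,Y\in\mathcal{A}T$ and $\mathbf a\in\mathcal A$ one has $\Phi(X\curvearrowright Y)=\Phi(X)\rhd\Phi(Y)$, $\Phi(\mathbf aX)=\Phi(\mathbf a)\odot\Phi(X)$, and $\Phi(\rho(X)\mathbf a)=\rho(\Phi(X))(\Phi(\mathbf a))$.
   Context: Fix a field $\mathbb K$ and a finite set $C$ of decorations. Trees side. An aromatic tree is a finite directed graph $(V,E)$ whose vertices carry decorations $d(v)\in C$, in which every vertex has exactly one outgoing edge except one vertex, the root, which has none; it is considered up to decoration-preserving isomorphism. The connected component of the root is a (rooted) tree; the other components are aromas (connected graphs in which every vertex has exactly one outgoing edge; each contains exactly one directed cycle). Let $T$ be the span of trees, $A_0$ the span of aromas, $\mathcal A=S(A_0)$ the symmetric algebra (multiaromas, product written by juxtaposition), and $\mathcal AT=\mathcal A\otimes T$ the span of aromatic trees $\mathbf a\tau$. The fertility $f(v)$ of a vertex is the number of edges ending at $v$. Grafting: for a tree $\tau_1$ and a tree or aroma $x$, $\tau_1\curvearrowright x$ is the sum over vertices $v$ of $x$ of the graph obtained by adding an edge from the root of $\tau_1$ to $v$; on multiaromas $\tau\curvearrowright(a^1\cdots a^m)=\sum_i a^1\cdots(\tau\curvearrowright a^i)\cdots a^m$; on aromatic trees $(\mathbf a_1\tau_1)\curvearrowright(\mathbf a_2\tau_2)=\mathbf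 a_1\mathbf a_2(\tau_1\curvearrowright\tau_2)+\mathbf a_1(\tau_1\curvearrowright\mathbf a_2)\tau_2$. The anchor is $\rho(\mathbf a_1\tau_1)(\mathbf a)=\mathbf a_1(\tau_1\curvearrowright\mathbf a)$. (With these, $\mathcal AT$ is a pre-Lie-Rinehart algebra over $\mathcal A$.) Multi-index side. $\overline N(C)$ is the polynomial algebra over $\mathbb K$ in variables $x^a_j$, $a\in C$, $j\ge -1$; monomials $x^{\mathbf k}=\prod(x^a_j)^{k^a_j}$ have weight $\sum j k^a_j$; $\partial$ is the derivation with $\partial x^a_j=x^a_{j+1}$; $M_n$ is the span of monomials of weight $n$ ($n=-1,0$; non-constant for $n=0$). $S(V)$ is the symmetric algebra with product $\odot$; $\mathcal AM_{-1}=S(M_0)\otimes M_{-1}$. The product $\rhd$: for monomials $x^{\mathbf k}\in M_{-1}$ and $P\in M_0\cup M_{-1}$, $x^{\mathbf k}\rhd P=x^{\mathbf k}\partial P$; $x^{\mathbf k}\rhd(x^{\kappa^1}\odot\cdots\odot x^{\kappa^m})=\sum_i x^{\kappa^1}\odot\cdots\odot(x^{\mathbf k}\rhd x^{\kappa^i})\odot\cdots\odot x^{\kappa^m}$; $(\mathbf y^1\odot x^{\mathbf k})\rhd\mathbf y=\mathbf y^1\odot(x^{\mathbf k}\rhd\mathbf y)$; $(\mathbf y^1\odot x^{\mathbf k^1})\rhd(\mathbf y^2\odot x^{\mathbf k^2})=\mathbf y^1\odot(x^{\mathbf k^1}\rhd\mathbf y^2)\odot x^{\mathbf k^2}+\mathbf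 y^1\odot\mathbf y^2\odot(x^{\mathbf k^1}\rhd x^{\mathbf k^2})$. The anchor is $\rho(X)(\mathbf y)=X\rhd\mathbf y$. Fertility map: for a tree $t$, $\Phi(t)=\prod_{v}x^{d(v)}_{f(v)-1}\in M_{-1}$; for an aroma $a$, $\Phi(a)=\prod_v x^{d(v)}_{f(v)-1}\in M_0$; $\Phi(a^1\cdots a^nt)=\Phi(a^1)\odot\cdots\odot\Phi(a^n)\odot\Phi(t)$, extended linearly. *)

theory Defs
  imports "HOL-Library.Poly_Mapping" "HOL-Library.Multiset"
begin

text \<open>The span of a set of basis objects of type 'b over a field 'k is
  represented by finitely supported functions ('b \<Rightarrow>0 'k).\<close>

definition smul :: "'k::field \<Rightarrow> ('b \<Rightarrow>\<^sub>0 'k) \<Rightarrow> ('b \<Rightarrow>\<^sub>0 'k)" where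
  "smul c P = Poly_Mapping.map ((*) c) P"

definition lin :: "('a \<Rightarrow> ('b \<Rightarrow>\<^sub>0 'k::field)) \<Rightarrow> ('a \<Rightarrow>\<^sub>0 'k) \<Rightarrow> ('b \<Rightarrow>\<^sub>0 'k)" where
  "lin f X = (\<Sum>x\<in>Poly_Mapping.keys X. smul (Poly_Mapping.lookup X x) (f x))"

definition bilin :: "('a \<Rightarrow> 'b \<Rightarrow> ('c \<Rightarrow>\<^sub>0 'k::field)) \<Rightarrow> ('a \<Rightarrow>\<^sub>0 'k) \<Rightarrow> ('b \<Rightarrow>\<^sub>0 'k) \<Rightarrow> ('c \<Rightarrow>\<^sub>0 'k)" where
  "bilin f X Y = lin (\<lambda>x. lin (\<lambda>y. f x y) Y) X"

definition bas :: "'b \<Rightarrow> ('b \<Rightarrow>\<^sub>0 'k::field)" where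
  "bas b = Poly_Mapping.single b 1"

text \<open>A concrete decorated directed graph in which every vertex has at most one
  outgoing edge: vertices are 0..<nv g, the decoration of v is dec g v, and
  out g v = Some w encodes the (unique) outgoing edge v \<rightarrow> w, None means no
  outgoing edge.  Values at arguments \<ge> nv g are irrelevant junk.\<close>
datatype 'c gr = Gr (nv: nat) (dec: "nat \<Rightarrow> 'c") (out: "nat \<Rightarrow> nat option")

definition gr_iso :: "'c gr \<Rightarrow> 'c gr \<Rightarrow> bool" where
  "gr_iso g h \<longleftrightarrow> nv g = nv h \<and>
     (\<exists>\<sigma>. bij_betw \<sigma> {..<nv g} {..<nv h} \<and>
        (\<forall>v<nv g. dec h (\<sigma> v) = dec g v \<and> out h (\<sigma> v) = map_option \<sigma> (out g v)))"

typedef 'c gcls = "{ {h. gr_iso g h} | g :: 'c gr. True }"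
  by blast

definition cls :: "'c gr \<Rightarrow> 'c gcls" where
  "cls g = Abs_gcls {h. gr_iso g h}"

definition repr :: "'c gcls \<Rightarrow> 'c gr" where
  "repr c = (SOME g. cls g = c)"

definition targets_ok :: "'c gr \<Rightarrow> bool" where
  "targets_ok g \<longleftrightarrow> (\<forall>v<nv g. \<forall>w. out g v = Some w \<longrightarrow> w < nv g)"

definition is_atree :: "'c gr \<Rightarrow> bool" where
  "is_atree g \<longleftrightarrow> targets_ok g \<and> (\<exists>!r. r < nv g \<and> out g r = None)"

text \<open>Multiaroma (finite product of aromas, possibly empty = unit): every vertex
  has exactly one outgoing edge.\<close>
definition is_multiaroma :: "'c gr \<Rightarrow> bool" where
  "is_multiaroma g \<longleftrightarrow> targets_ok g \<and> (\<forall>v<nv g. out g v \<noteq> None)"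

definition ATcls :: "'c gcls set" where
  "ATcls = {c. is_atree (repr c)}"

definition Acls :: "'c gcls set" where
  "Acls = {c. is_multiaroma (repr c)}"

definition root :: "'c gr \<Rightarrow> nat" where
  "root g = (THE r. r < nv g \<and> out g r = None)"

definition edges :: "'c gr \<Rightarrow> (nat \<times> nat) set" where
  "edges g = {(v, w). v < nv g \<and> out g v = Some w}"

definition comp :: "'c gr \<Rightarrow> nat \<Rightarrow> nat set" where
  "comp g v = {w. w < nv g \<and> (v, w) \<in> (edges g \<union> (edges g)\<inverse>)\<^sup>*}"

definition comps :: "'c gr \<Rightarrow> nat set set" where
  "comps g = {comp g v | v. v < nv g}"

text \<open>Disjoint union (the product of multiaromas / action of multiaromas).\<close>
definition du :: "'c gr \<Rightarrow> 'c gr \<Rightarrow> 'c gr" where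
  "du g h = Gr (nv g + nv h)
     (\<lambda>v. if v < nv g then dec g v else dec h (v - nv g))
     (\<lambda>v. if v < nv g then out g v else map_option (\<lambda>w. w + nv g) (out h (v - nv g)))"

definition empty_gr :: "'c gr" where
  "empty_gr = Gr 0 (\<lambda>_. undefined) (\<lambda>_. None)"

definition attach :: "'c gr \<Rightarrow> 'c gr \<Rightarrow> nat \<Rightarrow> 'c gr" where
  "attach g h v = (let u = du g h in
     Gr (nv u) (dec u) ((out u)(root g := Some (nv g + v))))"

text \<open>For an aromatic tree a1 t1 and an aromatic tree or multiaroma x, this is the
  sum over all vertices v of x of the graph obtained by adding an edge from the
  root of t1 to v; it equals a1 a2 (t1 \<curvearrowright> t2) + a1 (t1 \<curvearrowright> a2) t2
  when x = a2 t2, and a1 (t1 \<curvearrowright> x) = \<rho>(a1 t1)(x) when x is a multiaroma.\<close>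
definition graft_gr :: "'c gr \<Rightarrow> 'c gr \<Rightarrow> ('c gcls \<Rightarrow>\<^sub>0 'k::field)" where
  "graft_gr g h = (\<Sum>v<nv h. bas (cls (attach g h v)))"

definition graft :: "('c gcls \<Rightarrow>\<^sub>0 'k::field) \<Rightarrow> ('c gcls \<Rightarrow>\<^sub>0 'k) \<Rightarrow> ('c gcls \<Rightarrow>\<^sub>0 'k)" where
  "graft X Y = bilin (\<lambda>c d. graft_gr (repr c) (repr d)) X Y"

definition anchor :: "('c gcls \<Rightarrow>\<^sub>0 'k::field) \<Rightarrow> ('c gcls \<Rightarrow>\<^sub>0 'k) \<Rightarrow> ('c gcls \<Rightarrow>\<^sub>0 'k)" where
  "anchor X a = bilin (\<lambda>c d. graft_gr (repr c) (repr d)) X a"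

text \<open>Juxtaposition product (multiaroma times multiaroma, multiaroma times
  aromatic tree), bilinearly extended, and the unit (empty multiaroma).\<close>
definition amul :: "('c gcls \<Rightarrow>\<^sub>0 'k::field) \<Rightarrow> ('c gcls \<Rightarrow>\<^sub>0 'k) \<Rightarrow> ('c gcls \<Rightarrow>\<^sub>0 'k)" where
  "amul a X = bilin (\<lambda>c d. bas (cls (du (repr c) (repr d)))) a X"

definition unitA :: "'c gcls \<Rightarrow>\<^sub>0 'k::field" where
  "unitA = bas (cls empty_gr)"

text \<open>Variables of N(C): the pair (a, m) with m :: nat stands for x^a_{m-1}
  (so the index j = m - 1 ranges over j \<ge> -1).  Monomials are finitely
  supported exponent functions; polynomials are finitely supported
  coefficient functions on monomials (with the convolution product of
  Poly_Mapping as polynomial multiplication).\<close>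
type_synonym 'c mon = "('c \<times> nat) \<Rightarrow>\<^sub>0 nat"
type_synonym ('c, 'k) poly = "'c mon \<Rightarrow>\<^sub>0 'k"

text \<open>Symmetric algebra S(M_0): basis = finite multisets of monomials
  (x^{k1} \<odot> ... \<odot> x^{km}); product \<odot> = multiset union.\<close>
type_synonym ('c, 'k) sym = "'c mon multiset \<Rightarrow>\<^sub>0 'k"

text \<open>S(M_0) \<otimes> M_{-1}: basis = pairs (multiset of monomials, monomial).\<close>
type_synonym ('c, 'k) am = "('c mon multiset \<times> 'c mon) \<Rightarrow>\<^sub>0 'k"

text \<open>The derivation \<partial> (x^a_j \<mapsto> x^a_{j+1}) applied to a monomial.\<close>
definition dmon :: "'c mon \<Rightarrow> ('c, 'k::field) poly" where
  "dmon \<kappa> = (\<Sum>(a, m)\<in>Poly_Mapping.keys \<kappa>.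
     Poly_Mapping.single (\<kappa> - Poly_Mapping.single (a, m) 1 + Poly_Mapping.single (a, Suc m) 1)
                         (of_nat (Poly_Mapping.lookup \<kappa> (a, m))))"

text \<open>x^k \<rhd> x^\<kappa> = x^k \<partial> x^\<kappa>.\<close>
definition tri_mm :: "'c mon \<Rightarrow> 'c mon \<Rightarrow> ('c, 'k::field) poly" where
  "tri_mm k \<kappa> = Poly_Mapping.single k 1 * dmon \<kappa>"

definition ins_poly :: "'c mon multiset \<Rightarrow> ('c, 'k::field) poly \<Rightarrow> ('c, 'k) sym" where
  "ins_poly Y P = lin (\<lambda>\<mu>. bas (add_mset \<mu> Y)) P"

text \<open>x^k \<rhd> (x^{\<kappa>1} \<odot> ... \<odot> x^{\<kappa>m}) (sum over positions i, with multiplicity).\<close>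
definition tri_ms :: "'c mon \<Rightarrow> 'c mon multiset \<Rightarrow> ('c, 'k::field) sym" where
  "tri_ms k K = sum_mset (image_mset (\<lambda>\<kappa>. ins_poly (K - {#\<kappa>#}) (tri_mm k \<kappa>)) K)"

definition symmul :: "('c, 'k::field) sym \<Rightarrow> ('c, 'k) sym \<Rightarrow> ('c, 'k) sym" where
  "symmul P Q = bilin (\<lambda>A B. bas (A + B)) P Q"

definition unitS :: "('c, 'k::field) sym" where
  "unitS = bas {#}"

text \<open>Module action \<odot> of S(M_0) on S(M_0) \<otimes> M_{-1}.\<close>
definition symam :: "('c, 'k::field) sym \<Rightarrow> ('c, 'k) am \<Rightarrow> ('c, 'k) am" where
  "symam P X = bilin (\<lambda>A (B, k). bas (A + B, k)) P X"

text \<open>(y1 \<odot> x^{k1}) \<rhd> y = y1 \<odot> (x^{k1} \<rhd> y), bilinearly extended;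
  this is the anchor \<rho>(X)(y) = X \<rhd> y.\<close>
definition tri_as :: "('c, 'k::field) am \<Rightarrow> ('c, 'k) sym \<Rightarrow> ('c, 'k) sym" where
  "tri_as X Y = bilin (\<lambda>(Y1, k1) Y2. symmul (bas Y1) (tri_ms k1 Y2)) X Y"

text \<open>(y1 \<odot> x^{k1}) \<rhd> (y2 \<odot> x^{k2}) =
  y1 \<odot> (x^{k1} \<rhd> y2) \<odot> x^{k2} + y1 \<odot> y2 \<odot> (x^{k1} \<rhd> x^{k2}),
  bilinearly extended.\<close>
definition tri_aa :: "('c, 'k::field) am \<Rightarrow> ('c, 'k) am \<Rightarrow> ('c, 'k) am" where
  "tri_aa X Y = bilin (\<lambda>(Y1, k1) (Y2, k2).
      symam (symmul (bas Y1) (tri_ms k1 Y2)) (bas ({#}, k2))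
    + symam (bas (Y1 + Y2)) (lin (\<lambda>\<mu>. bas ({#}, \<mu>)) (tri_mm k1 k2))) X Y"

definition fert :: "'c gr \<Rightarrow> nat \<Rightarrow> nat" where
  "fert g v = card {w. w < nv g \<and> out g w = Some v}"

text \<open>\<Prod>_{v\<in>S} x^{d(v)}_{f(v)-1} (encoded with index f(v), see above).\<close>
definition vmon :: "'c gr \<Rightarrow> nat set \<Rightarrow> 'c mon" where
  "vmon g S = (\<Sum>v\<in>S. Poly_Mapping.single (dec g v, fert g v) 1)"

text \<open>\<Phi>(a^1 ... a^n t) = \<Phi>(a^1) \<odot> ... \<odot> \<Phi>(a^n) \<odot> \<Phi>(t).\<close>
definition phiAT_gr :: "'c gr \<Rightarrow> 'c mon multiset \<times> 'c mon" where
  "phiAT_gr g = (image_mset (vmon g) (mset_set (comps g - {comp g (root g)})),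
                 vmon g (comp g (root g)))"

text \<open>\<Phi>(a^1 ... a^n) = \<Phi>(a^1) \<odot> ... \<odot> \<Phi>(a^n).\<close>
definition phiA_gr :: "'c gr \<Rightarrow> 'c mon multiset" where
  "phiA_gr g = image_mset (vmon g) (mset_set (comps g))"

definition PhiAT :: "('c gcls \<Rightarrow>\<^sub>0 'k::field) \<Rightarrow> ('c, 'k) am" where
  "PhiAT X = lin (\<lambda>c. bas (phiAT_gr (repr c))) X"

definition PhiA :: "('c gcls \<Rightarrow>\<^sub>0 'k::field) \<Rightarrow> ('c, 'k) sym" where
  "PhiA a = lin (\<lambda>c. bas (phiA_gr (repr c))) a"

end

theory Submission
  imports Defs
begin


lemma lookup_smul[simp]: "Poly_Mapping.lookup (smul c P) x = c * Poly_Mapping.lookup P x"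
  unfolding smul_def by (simp add: Poly_Mapping.map.rep_eq when_def)

lemma smul_0[simp]: "smul 0 P = 0"
  by (rule poly_mapping_eqI) simp
lemma smul_zero[simp]: "smul c 0 = 0"
  by (rule poly_mapping_eqI) simp
lemma smul_1[simp]: "smul 1 P = P"
  by (rule poly_mapping_eqI) simp
lemma smul_add_left: "smul (a + b) P = smul a P + smul b P"
  by (rule poly_mapping_eqI) (simp add: lookup_add algebra_simps)
lemma smul_add_right: "smul c (P + Q) = smul c P + smul c Q"
  by (rule poly_mapping_eqI) (simp add: lookup_add algebra_simps)
lemma smul_smul: "smul a (smul b P) = smul (a * b) P"
  by (rule poly_mapping_eqI) (simp add: algebra_simps)
lemma smul_sum: "smul c (sum f S) = (\<Sum>x\<in>S. smul c (f x))"
  by (rule poly_mapping_eqI) (simp add: lookup_sum sum_distrib_left)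
lemma sum_smul: "smul (sum f S) P = (\<Sum>x\<in>S. smul (f x) P)"
  by (rule poly_mapping_eqI) (simp add: lookup_sum sum_distrib_right)

lemma lin_superset:
  assumes "finite S" "Poly_Mapping.keys X \<subseteq> S"
  shows "lin f X = (\<Sum>x\<in>S. smul (Poly_Mapping.lookup X x) (f x))"
  unfolding lin_def
  by (rule sum.mono_neutral_left) (auto simp: assms in_keys_iff)

lemma lin_add: "lin f (X + Y) = lin f X + lin f Y"
proof -
  let ?S = "Poly_Mapping.keys X \<union> Poly_Mapping.keys Y"
  have "lin f (X + Y) = (\<Sum>x\<in>?S. smul (Poly_Mapping.lookup (X+Y) x) (f x))"
    by (rule lin_superset) (auto simp: keys_add)
  also have "\<dots> = (\<Sum>x\<in>?S. smul (Poly_Mapping.lookup X x) (f x)) + (\<Sum>x\<in>?S. smul (Poly_Mapping.lookup Y x) (f x))"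
    by (simp add: lookup_add smul_add_left sum.distrib)
  also have "\<dots> = lin f X + lin f Y"
    by (subst (1 2) lin_superset[symmetric]) auto
  finally show ?thesis .
qed

lemma lin_zero[simp]: "lin f 0 = 0"
  by (simp add: lin_def)

lemma lin_sum: "lin f (sum g S) = (\<Sum>x\<in>S. lin f (g x))"
  by (induction S rule: infinite_finite_induct) (auto simp: lin_add)

lemma keys_smul_sub: "Poly_Mapping.keys (smul c X) \<subseteq> Poly_Mapping.keys X"
  by (auto simp: in_keys_iff)

lemma lin_smul: "lin f (smul c X) = smul c (lin f X)"
proof -
  have "lin f (smul c X) = (\<Sum>x\<in>Poly_Mapping.keys X. smul (Poly_Mapping.lookup (smul c X) x) (f x))"
    by (rule lin_superset) (auto simp: in_keys_iff)
  then show ?thesis by (simp add: lin_def smul_sum smul_smul)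
qed

lemma lin_bas[simp]: "lin f (bas b) = f b"
  by (simp add: lin_def bas_def)

lemma lin_single: "lin f (Poly_Mapping.single b c) = smul c (f b)"
  by (simp add: lin_def)

lemma lin_cong: "(\<And>x. x \<in> Poly_Mapping.keys X \<Longrightarrow> f x = g x) \<Longrightarrow> lin f X = lin g X"
  by (simp add: lin_def)

lemma lin_lin: "lin g (lin f X) = lin (\<lambda>x. lin g (f x)) X"
proof -
  have "lin f X = (\<Sum>x\<in>Poly_Mapping.keys X. smul (Poly_Mapping.lookup X x) (f x))"
    by (simp add: lin_def)
  then have "lin g (lin f X) = (\<Sum>x\<in>Poly_Mapping.keys X. smul (Poly_Mapping.lookup X x) (lin g (f x)))"
    by (simp add: lin_sum lin_smul)
  then show ?thesis by (simp add: lin_def[of "\<lambda>x. lin g (f x)"])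
qed

lemma lin_swap: "lin (\<lambda>x. lin (\<lambda>y. G x y) B) A = lin (\<lambda>y. lin (\<lambda>x. G x y) A) B"
  unfolding lin_def by (simp add: smul_sum smul_smul mult.commute sum.swap[of _ "Poly_Mapping.keys A"])

lemma lin_id: "lin bas X = X"
  by (rule poly_mapping_eqI)
     (simp add: lin_def lookup_sum bas_def lookup_single when_def in_keys_iff if_distrib[of "(*) _"] sum.delta cong: if_cong)

lemma lin_zero_fun[simp]: "lin (\<lambda>x. 0) X = 0"
  by (simp add: lin_def)

lemma lin_add_fun: "lin (\<lambda>x. f x + g x) X = lin f X + lin g X"
  by (simp add: lin_def smul_add_right sum.distrib)

lemma lin_sum_fun: "lin (\<lambda>x. \<Sum>i\<in>I. f i x) X = (\<Sum>i\<in>I. lin (f i) X)"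
  by (induction I rule: infinite_finite_induct) (auto simp: lin_add_fun)

lemma lin_smul_fun: "lin (\<lambda>x. smul c (f x)) X = smul c (lin f X)"
  by (simp add: lin_def smul_sum smul_smul mult.commute)


lemma bilin_bas[simp]: "bilin f (bas x) (bas y) = f x y"
  by (simp add: bilin_def)

lemma bilin_lin_lin: "bilin F (lin p X) (lin q Y) = bilin (\<lambda>x y. bilin F (p x) (q y)) X Y"
  unfolding bilin_def by (simp add: lin_lin lin_swap[of _ Y])

lemma bilin_cong:
  "(\<And>x y. x \<in> Poly_Mapping.keys X \<Longrightarrow> y \<in> Poly_Mapping.keys Y \<Longrightarrow> f x y = g x y) \<Longrightarrow> bilin f X Y = bilin g X Y"
  unfolding bilin_def by (intro lin_cong) simp

lemma lin_bilin: "lin h (bilin f X Y) = bilin (\<lambda>x y. lin h (f x y)) X Y"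
  unfolding bilin_def by (simp add: lin_lin)

lemma bilin_add_fun: "bilin (\<lambda>x y. f x y + g x y) X Y = bilin f X Y + bilin g X Y"
  unfolding bilin_def by (simp add: lin_add_fun)

lemma bilin_lin_left: "bilin F (lin p X) Y = lin (\<lambda>x. bilin F (p x) Y) X"
  unfolding bilin_def by (simp add: lin_lin)

lemma bilin_bas_left: "bilin F (bas x) Y = lin (F x) Y"
  by (simp add: bilin_def)

lemma bilin_bas_right: "bilin F X (bas y) = lin (\<lambda>x. F x y) X"
  by (simp add: bilin_def)


lemma rtrancl_map_prod:
  "(x, y) \<in> R\<^sup>* \<Longrightarrow> (f x, f y) \<in> (map_prod f f ` R)\<^sup>*"
proof (induction rule: rtrancl_induct)
  case base then show ?case by simp
next
  case (step y z)
  then have "(f y, f z) \<in> map_prod f f ` R" by force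
  with step show ?case by (meson rtrancl.rtrancl_into_rtrancl)
qed

lemma rtrancl_stays:
  assumes "(x, y) \<in> R\<^sup>*" "x \<in> D" "Field R \<subseteq> D"
  shows "y \<in> D"
  using assms by (induction rule: rtrancl_induct) (auto simp: Field_def)

lemma rtrancl_map_prod_inv:
  assumes "(a', b) \<in> (map_prod f f ` R)\<^sup>*" "a' = f a" "inj_on f D" "Field R \<subseteq> D" "a \<in> D"
  shows "\<exists>b'. b = f b' \<and> (a, b') \<in> R\<^sup>*"
  using assms(1)
proof (induction rule: rtrancl_induct)
  case base then show ?case using assms(2) by auto
next
  case (step y z)
  then obtain b' where b': "y = f b'" "(a, b') \<in> R\<^sup>*" by auto
  from step(2) obtain p q where pq: "(p, q) \<in> R" "y = f p" "z = f q" by auto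
  have "b' \<in> D" using rtrancl_stays[OF b'(2) assms(5,4)] .
  moreover have "p \<in> D" using pq(1) assms(4) by (auto simp: Field_def)
  ultimately have "p = b'" using assms(3) b'(1) pq(2) by (auto dest: inj_onD)
  then have "(a, q) \<in> R\<^sup>*" using pq b' by (meson rtrancl.rtrancl_into_rtrancl)
  then show ?case using pq(3) by blast
qed

lemma rtrancl_Un_sep:
  assumes "(x, y) \<in> (R \<union> S)\<^sup>*" "x \<in> D" "Field R \<subseteq> D" "Field S \<inter> D = {}"
  shows "(x, y) \<in> R\<^sup>*"
  using assms(1)
proof (induction rule: rtrancl_induct)
  case base then show ?case by simp
next
  case (step y z)
  have "y \<in> D" using rtrancl_stays[OF step(3) assms(2,3)] .
  then have "(y, z) \<in> R" using step(2) assms(4) by (auto simp: Field_def)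
  with step(3) show ?case by (meson rtrancl.rtrancl_into_rtrancl)
qed

lemma rtrancl_add_edge:
  assumes "sym R" "(x, y) \<in> (R \<union> {(a, b), (b, a)})\<^sup>*"
  shows "(x, y) \<in> R\<^sup>* \<or> ((x, a) \<in> R\<^sup>* \<and> (b, y) \<in> R\<^sup>*) \<or> ((x, b) \<in> R\<^sup>* \<and> (a, y) \<in> R\<^sup>*)"
  using assms(2)
proof (induction rule: rtrancl_induct)
  case base then show ?case by simp
next
  case (step y z)
  have symS: "sym (R\<^sup>*)" using assms(1) by (rule sym_rtrancl)
  have sw: "(u, w) \<in> R\<^sup>* \<Longrightarrow> (w, u) \<in> R\<^sup>*" for u w using symS by (auto dest: symD)
  have tr: "(u, w) \<in> R\<^sup>* \<Longrightarrow> (w, t) \<in> R\<^sup>* \<Longrightarrow> (u, t) \<in> R\<^sup>*" for u w t by auto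
  from step(2) consider "(y, z) \<in> R" | "y = a" "z = b" | "y = b" "z = a" by auto
  then show ?case
  proof cases
    case 1
    then have "(y, z) \<in> R\<^sup>*" by auto
    then show ?thesis using step(3) tr by blast
  next
    case 2
    then show ?thesis using step(3) tr sw by blast
  next
    case 3
    then show ?thesis using step(3) tr sw by blast
  qed
qed

lemma rtrancl_add_edge_iff:
  assumes "sym R"
  shows "(x, y) \<in> (R \<union> {(a, b), (b, a)})\<^sup>* \<longleftrightarrow>
    (x, y) \<in> R\<^sup>* \<or> ((x, a) \<in> R\<^sup>* \<and> (b, y) \<in> R\<^sup>*) \<or> ((x, b) \<in> R\<^sup>* \<and> (a, y) \<in> R\<^sup>*)"
proof
  assume "(x, y) \<in> (R \<union> {(a, b), (b, a)})\<^sup>*" then show "(x, y) \<in> R\<^sup>* \<or> ((x, a) \<in> R\<^sup>* \<and> (b, y) \<in> R\<^sup>*) \<or> ((x, b) \<in> R\<^sup>* \<and> (a, y) \<in> R\<^sup>*)"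
    using rtrancl_add_edge[OF assms] by blast
next
  have m: "R\<^sup>* \<subseteq> (R \<union> {(a, b), (b, a)})\<^sup>*" by (rule rtrancl_mono) auto
  have ab: "(a, b) \<in> (R \<union> {(a, b), (b, a)})\<^sup>*" "(b, a) \<in> (R \<union> {(a, b), (b, a)})\<^sup>*" by auto
  assume "(x, y) \<in> R\<^sup>* \<or> ((x, a) \<in> R\<^sup>* \<and> (b, y) \<in> R\<^sup>*) \<or> ((x, b) \<in> R\<^sup>* \<and> (a, y) \<in> R\<^sup>*)"
  then show "(x, y) \<in> (R \<union> {(a, b), (b, a)})\<^sup>*"
    using m ab by (meson rtrancl_trans subsetD)
qed


definition E :: "'c gr \<Rightarrow> (nat \<times> nat) set" where
  "E g = edges g \<union> (edges g)\<inverse>"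

lemma comp_alt: "comp g v = {w. w < nv g \<and> (v, w) \<in> (E g)\<^sup>*}"
  by (simp add: comp_def E_def)

lemma sym_E: "sym (E g)"
  by (auto simp: E_def sym_def)

lemma sym_conn: "(x, y) \<in> (E g)\<^sup>* \<Longrightarrow> (y, x) \<in> (E g)\<^sup>*"
  using sym_rtrancl[OF sym_E[of g]] by (auto dest: symD)

lemma Field_E: "targets_ok g \<Longrightarrow> Field (E g) \<subseteq> {..<nv g}"
  by (auto simp: E_def edges_def targets_ok_def Field_def)

lemma comp_self: "v < nv g \<Longrightarrow> v \<in> comp g v"
  by (simp add: comp_alt)

lemma comp_sub: "comp g v \<subseteq> {..<nv g}"
  by (auto simp: comp_alt)

lemma finite_comp[simp]: "finite (comp g v)"
  using comp_sub finite_subset by blast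

lemma comp_eq: "w \<in> comp g v \<Longrightarrow> comp g w = comp g v"
  unfolding comp_alt using sym_conn[of _ _ g] rtrancl_trans[of _ _ "E g"] by blast

lemma comp_disj: "comp g v \<noteq> comp g w \<Longrightarrow> comp g v \<inter> comp g w = {}"
  using comp_eq by blast

lemma finite_comps[simp]: "finite (comps g)"
proof -
  have "comps g = comp g ` {..<nv g}" by (auto simp: comps_def)
  then show ?thesis by simp
qed

lemma Union_comps: "\<Union>(comps g) = {..<nv g}"
  using comp_sub comp_self by (fastforce simp: comps_def)

lemma comps_in: "C \<in> comps g \<Longrightarrow> v \<in> C \<Longrightarrow> comp g v = C"
  unfolding comps_def using comp_eq by blast

lemma comps_nonempty: "C \<in> comps g \<Longrightarrow> C \<noteq> {}"
  using comp_self by (auto simp: comps_def)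

lemma comps_disj: "C \<in> comps g \<Longrightarrow> D \<in> comps g \<Longrightarrow> C \<noteq> D \<Longrightarrow> C \<inter> D = {}"
  using comps_in by blast

lemma comp_in_comps: "v < nv g \<Longrightarrow> comp g v \<in> comps g"
  by (auto simp: comps_def)

lemma comps_sub: "C \<in> comps g \<Longrightarrow> C \<subseteq> {..<nv g}"
  using comp_sub by (auto simp: comps_def)

lemma finite_comps_elem: "C \<in> comps g \<Longrightarrow> finite C"
  using comps_sub finite_subset by blast

lemma sum_comps: "(\<Sum>v<nv g. F v) = (\<Sum>C\<in>comps g. \<Sum>v\<in>C. F v)"
proof -
  have "(\<Sum>v<nv g. F v) = sum F (\<Union>(comps g))" by (simp add: Union_comps)
  also have "\<dots> = (\<Sum>C\<in>comps g. \<Sum>v\<in>C. F v)"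
  proof -
    have "sum F (\<Union>(comps g)) = (sum \<circ> sum) F (comps g)"
      by (rule sum.Union_disjoint) (use finite_comps_elem comps_disj in blast)+
    then show ?thesis by simp
  qed
  finally show ?thesis .
qed

definition isoby :: "(nat \<Rightarrow> nat) \<Rightarrow> 'c gr \<Rightarrow> 'c gr \<Rightarrow> bool" where
  "isoby \<sigma> g h \<longleftrightarrow> nv g = nv h \<and> bij_betw \<sigma> {..<nv g} {..<nv h} \<and>
        (\<forall>v<nv g. dec h (\<sigma> v) = dec g v \<and> out h (\<sigma> v) = map_option \<sigma> (out g v))"

lemma gr_iso_isoby: "gr_iso g h \<Longrightarrow> \<exists>\<sigma>. isoby \<sigma> g h"
  by (auto simp: gr_iso_def isoby_def)

lemma gr_iso_refl: "gr_iso g g"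
  unfolding gr_iso_def by (intro conjI exI[of _ id]) (auto simp: option.map_id)

lemma cls_eq: "cls g = cls h \<Longrightarrow> gr_iso h g"
proof -
  assume "cls g = cls h"
  then have "{x. gr_iso g x} = {x. gr_iso h x}"
    unfolding cls_def by (subst (asm) Abs_gcls_inject) auto
  then show ?thesis using gr_iso_refl[of g] by blast
qed

lemma cls_repr: "cls (repr c) = c"
proof -
  obtain g where "Rep_gcls c = {h. gr_iso g h}" using Rep_gcls[of c] by auto
  then have "cls g = c" unfolding cls_def by (metis Rep_gcls_inverse)
  then have "\<exists>g. cls g = c" by blast
  then show ?thesis unfolding repr_def by (rule someI_ex)
qed

lemma iso_repr_cls: "\<exists>\<sigma>. isoby \<sigma> g (repr (cls g))"
  using cls_eq[OF cls_repr[of "cls g"]] gr_iso_isoby by blast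

context
  fixes \<sigma> :: "nat \<Rightarrow> nat" and g h :: "'c gr"
  assumes iso: "isoby \<sigma> g h"
begin

lemma iso_nv: "nv h = nv g"
  using iso by (simp add: isoby_def)

lemma iso_bij: "bij_betw \<sigma> {..<nv g} {..<nv g}"
  using iso unfolding isoby_def by metis

lemma iso_inj: "inj_on \<sigma> {..<nv g}"
  using iso_bij bij_betw_imp_inj_on by blast

lemma iso_img: "\<sigma> ` {..<nv g} = {..<nv g}"
  using iso_bij bij_betw_imp_surj_on by blast

lemma iso_lt: "v < nv g \<Longrightarrow> \<sigma> v < nv g"
  using iso_img by blast

lemma iso_dec: "v < nv g \<Longrightarrow> dec h (\<sigma> v) = dec g v"
  using iso by (simp add: isoby_def)

lemma iso_out: "v < nv g \<Longrightarrow> out h (\<sigma> v) = map_option \<sigma> (out g v)"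
  using iso by (simp add: isoby_def)

lemma iso_surj: "w < nv g \<Longrightarrow> \<exists>v<nv g. w = \<sigma> v"
  using iso_img by (metis imageE lessThan_iff)

lemma iso_edges: "edges h = map_prod \<sigma> \<sigma> ` edges g"
proof (intro set_eqI iffI)
  fix e assume "e \<in> edges h"
  then obtain v' w where e: "e = (v', w)" "v' < nv g" "out h v' = Some w"
    by (auto simp: edges_def iso_nv)
  obtain v where v: "v < nv g" "v' = \<sigma> v" using iso_surj e(2) by blast
  then obtain w0 where "out g v = Some w0" "w = \<sigma> w0" using e iso_out by auto
  then show "e \<in> map_prod \<sigma> \<sigma> ` edges g" using e v by (auto simp: edges_def)
next
  fix e assume "e \<in> map_prod \<sigma> \<sigma> ` edges g"
  then show "e \<in> edges h" using iso_out iso_lt by (auto simp: edges_def iso_nv)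
qed

lemma iso_E: "E h = map_prod \<sigma> \<sigma> ` E g"
  unfolding E_def iso_edges by auto

lemma iso_targets: "targets_ok g \<Longrightarrow> targets_ok h"
  unfolding targets_ok_def iso_nv
proof (intro allI impI)
  fix v' w assume t: "\<forall>v<nv g. \<forall>w. out g v = Some w \<longrightarrow> w < nv g" and v': "v' < nv g" "out h v' = Some w"
  obtain v where v: "v < nv g" "v' = \<sigma> v" using iso_surj v'(1) by blast
  then obtain w0 where "out g v = Some w0" "w = \<sigma> w0" using v' iso_out by auto
  then show "w < nv g" using t v iso_lt by auto
qed

lemma iso_comp:
  assumes t: "targets_ok g" and v: "v < nv g"
  shows "comp h (\<sigma> v) = \<sigma> ` comp g v"
proof (intro set_eqI iffI)
  fix w assume "w \<in> comp h (\<sigma> v)"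
  then have w: "w < nv g" "(\<sigma> v, w) \<in> (map_prod \<sigma> \<sigma> ` E g)\<^sup>*"
    by (auto simp: comp_alt iso_nv iso_E)
  obtain w' where w': "w = \<sigma> w'" "(v, w') \<in> (E g)\<^sup>*"
    using rtrancl_map_prod_inv[OF w(2) refl iso_inj Field_E[OF t]] v by auto
  have "w' < nv g" using rtrancl_stays[OF w'(2), of "{..<nv g}"] Field_E[OF t] v by auto
  then show "w \<in> \<sigma> ` comp g v" using w' by (auto simp: comp_alt)
next
  fix w assume "w \<in> \<sigma> ` comp g v"
  then obtain w' where "w = \<sigma> w'" "w' < nv g" "(v, w') \<in> (E g)\<^sup>*" by (auto simp: comp_alt)
  then show "w \<in> comp h (\<sigma> v)"
    using rtrancl_map_prod[of v w' "E g" \<sigma>] iso_lt by (auto simp: comp_alt iso_nv iso_E)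
qed

lemma iso_comps:
  assumes t: "targets_ok g"
  shows "comps h = image \<sigma> ` comps g"
proof (intro set_eqI iffI)
  fix C assume "C \<in> comps h"
  then obtain w where "w < nv g" "C = comp h w" by (auto simp: comps_def iso_nv)
  then obtain v where "v < nv g" "C = comp h (\<sigma> v)" using iso_surj by blast
  then show "C \<in> image \<sigma> ` comps g" using iso_comp[OF t] by (auto simp: comps_def)
next
  fix C assume "C \<in> image \<sigma> ` comps g"
  then obtain v where "v < nv g" "C = \<sigma> ` comp g v" by (auto simp: comps_def)
  then have "C = comp h (\<sigma> v)" "\<sigma> v < nv h" using iso_comp[OF t] iso_lt by (auto simp: iso_nv)
  then show "C \<in> comps h" by (auto simp: comps_def)
qed

lemma iso_fert:
  assumes t: "targets_ok g" and v: "v < nv g"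
  shows "fert h (\<sigma> v) = fert g v"
proof -
  have "{w. w < nv h \<and> out h w = Some (\<sigma> v)} = \<sigma> ` {w. w < nv g \<and> out g w = Some v}"
  proof (intro set_eqI iffI)
    fix w' assume "w' \<in> {w. w < nv h \<and> out h w = Some (\<sigma> v)}"
    then have w': "w' < nv g" "out h w' = Some (\<sigma> v)" by (auto simp: iso_nv)
    obtain w where w: "w < nv g" "w' = \<sigma> w" using iso_surj w'(1) by blast
    have "out h (\<sigma> w) = map_option \<sigma> (out g w)" using iso_out w(1) by blast
    with w' w(2) obtain x where x: "out g w = Some x" "\<sigma> x = \<sigma> v" by (cases "out g w") auto
    have "x < nv g" using t w(1) x(1) unfolding targets_ok_def by blast
    then have "x = v" using x(2) v iso_inj by (auto dest: inj_onD)
    then show "w' \<in> \<sigma> ` {w. w < nv g \<and> out g w = Some v}" using w x by auto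
  next
    fix w' assume "w' \<in> \<sigma> ` {w. w < nv g \<and> out g w = Some v}"
    then show "w' \<in> {w. w < nv h \<and> out h w = Some (\<sigma> v)}" using iso_out iso_lt by (auto simp: iso_nv)
  qed
  moreover have "inj_on \<sigma> {w. w < nv g \<and> out g w = Some v}"
    using iso_inj by (rule inj_on_subset) auto
  ultimately show ?thesis unfolding fert_def by (simp add: card_image)
qed

lemma iso_vmon:
  assumes t: "targets_ok g" and S: "S \<subseteq> {..<nv g}"
  shows "vmon h (\<sigma> ` S) = vmon g S"
proof -
  have inj: "inj_on \<sigma> S" using iso_inj S by (rule inj_on_subset)
  show ?thesis unfolding vmon_def
    using S by (simp add: sum.reindex[OF inj] iso_dec iso_fert[OF t] subset_eq)
qed

lemma iso_phiA:
  assumes t: "targets_ok g"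
  shows "phiA_gr h = phiA_gr g"
proof -
  have inj: "inj_on (image \<sigma>) (comps g)"
    using inj_on_image[of \<sigma> "comps g"] iso_inj by (simp add: Union_comps)
  have "phiA_gr h = image_mset (vmon h) (image_mset (image \<sigma>) (mset_set (comps g)))"
    unfolding phiA_gr_def iso_comps[OF t] by (simp add: image_mset_mset_set[OF inj])
  also have "\<dots> = image_mset (vmon g) (mset_set (comps g))"
    unfolding image_mset.compositionality
    by (rule image_mset_cong) (simp add: iso_vmon[OF t] comps_sub elem_mset_set[OF finite_comps] del: elem_mset_set)
  finally show ?thesis by (simp add: phiA_gr_def)
qed

lemma iso_root:
  assumes a: "is_atree g"
  shows "root h = \<sigma> (root g)" "is_atree h"
proof -
  have t: "targets_ok g" using a unfolding is_atree_def by (rule conjunct1)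
  have ex: "\<exists>!r. r < nv g \<and> out g r = None" using a unfolding is_atree_def by (rule conjunct2)
  then have "\<exists>r. (r < nv g \<and> out g r = None) \<and> (\<forall>y. y < nv g \<and> out g y = None \<longrightarrow> y = r)"
    by (simp only: Ex1_def)
  then obtain r where r0: "r < nv g \<and> out g r = None" and r3: "\<forall>y. y < nv g \<and> out g y = None \<longrightarrow> y = r"
    by blast
  have rg: "root g = r" unfolding root_def
    by (rule the_equality) (rule r0, use r3 in blast)
  have h1: "\<sigma> r < nv h \<and> out h (\<sigma> r) = None"
  proof
    show "\<sigma> r < nv h" using iso_lt[of r] r0 iso_nv by simp
    show "out h (\<sigma> r) = None" using iso_out[of r] r0 by simp
  qed
  have h2: "\<forall>r'. r' < nv h \<and> out h r' = None \<longrightarrow> r' = \<sigma> r"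
  proof (intro allI impI)
    fix r' assume that: "r' < nv h \<and> out h r' = None"
    then have "r' < nv g" using iso_nv by simp
    then obtain w where w: "w < nv g" "r' = \<sigma> w" using iso_surj by blast
    have "out h (\<sigma> w) = map_option \<sigma> (out g w)" using iso_out w(1) by blast
    then have "out g w = None" using that w(2) by simp
    then have "w = r" using r3 w(1) by blast
    then show "r' = \<sigma> r" using w(2) by simp
  qed
  have "root h = \<sigma> r" unfolding root_def
    by (rule the_equality) (rule h1, use h2 in blast)
  then show "root h = \<sigma> (root g)" using rg by simp
  have "\<exists>!r. r < nv h \<and> out h r = None" using h1 h2 by (intro ex1I) blast+
  then show "is_atree h" unfolding is_atree_def using iso_targets[OF t] by blast
qed

lemma iso_phiAT:
  assumes a: "is_atree g"
  shows "phiAT_gr h = phiAT_gr g"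
proof -
  have t: "targets_ok g" using a by (simp add: is_atree_def)
  have rlt: "root g < nv g" using a unfolding is_atree_def root_def by (metis (mono_tags, lifting) theI')
  have inj: "inj_on (image \<sigma>) (comps g)"
    using inj_on_image[of \<sigma> "comps g"] iso_inj by (simp add: Union_comps)
  have rc: "comp h (root h) = \<sigma> ` comp g (root g)"
    using iso_root(1)[OF a] iso_comp[OF t rlt] by simp
  have cg: "comp g (root g) \<in> comps g" using rlt by (rule comp_in_comps)
  have "comps h - {comp h (root h)} = image \<sigma> ` (comps g - {comp g (root g)})"
    unfolding iso_comps[OF t] rc using inj cg by (auto dest: inj_onD)
  moreover have inj2: "inj_on (image \<sigma>) (comps g - {comp g (root g)})" using inj by (rule inj_on_subset) auto
  ultimately have "fst (phiAT_gr h) = image_mset (vmon h) (image_mset (image \<sigma>) (mset_set (comps g - {comp g (root g)})))"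
    unfolding phiAT_gr_def by (simp add: image_mset_mset_set[OF inj2])
  also have "\<dots> = fst (phiAT_gr g)"
    unfolding image_mset.compositionality phiAT_gr_def fst_conv
    by (rule image_mset_cong) (simp add: iso_vmon[OF t] comps_sub)
  finally have 1: "fst (phiAT_gr h) = fst (phiAT_gr g)" .
  have "snd (phiAT_gr h) = snd (phiAT_gr g)"
    unfolding phiAT_gr_def snd_conv rc using iso_vmon[OF t comp_sub] .
  with 1 show ?thesis by (simp add: prod_eq_iff)
qed

end

lemma phiA_repr_cls: "targets_ok g \<Longrightarrow> phiA_gr (repr (cls g)) = phiA_gr g"
  using iso_repr_cls[of g] iso_phiA by blast

lemma phiAT_repr_cls: "is_atree g \<Longrightarrow> phiAT_gr (repr (cls g)) = phiAT_gr g"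
  using iso_repr_cls[of g] iso_phiAT by blast


lemma nv_du[simp]: "nv (du g h) = nv g + nv h"
  by (simp add: du_def)
lemma dec_du: "dec (du g h) v = (if v < nv g then dec g v else dec h (v - nv g))"
  by (simp add: du_def)
lemma out_du: "out (du g h) v = (if v < nv g then out g v else map_option (\<lambda>w. w + nv g) (out h (v - nv g)))"
  by (simp add: du_def)

lemma edges_du: "edges (du g h) = edges g \<union> map_prod (\<lambda>x. x + nv g) (\<lambda>x. x + nv g) ` edges h"
proof (intro set_eqI iffI)
  fix e assume "e \<in> edges (du g h)"
  then obtain x y where e: "e = (x, y)" "x < nv g + nv h" "out (du g h) x = Some y"
    by (auto simp: edges_def)
  show "e \<in> edges g \<union> map_prod (\<lambda>x. x + nv g) (\<lambda>x. x + nv g) ` edges h"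
  proof (cases "x < nv g")
    case True then show ?thesis using e by (simp add: out_du edges_def)
  next
    case False
    then obtain y' where y': "out h (x - nv g) = Some y'" "y = y' + nv g" using e by (auto simp: out_du)
    have "(x - nv g, y') \<in> edges h" using y' e False by (simp add: edges_def)
    moreover have "e = map_prod (\<lambda>x. x + nv g) (\<lambda>x. x + nv g) (x - nv g, y')" using e y' False by simp
    ultimately show ?thesis by blast
  qed
next
  fix e assume "e \<in> edges g \<union> map_prod (\<lambda>x. x + nv g) (\<lambda>x. x + nv g) ` edges h"
  then show "e \<in> edges (du g h)" by (auto simp: edges_def out_du)
qed

lemma E_du: "E (du g h) = E g \<union> map_prod (\<lambda>x. x + nv g) (\<lambda>x. x + nv g) ` E h"
  unfolding E_def edges_du converse_Un by (auto simp: image_Un converse_def)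

lemma targets_du: "targets_ok g \<Longrightarrow> targets_ok h \<Longrightarrow> targets_ok (du g h)"
  unfolding targets_ok_def
proof (intro allI impI)
  fix v w
  assume tg: "\<forall>v<nv g. \<forall>w. out g v = Some w \<longrightarrow> w < nv g" and th: "\<forall>v<nv h. \<forall>w. out h v = Some w \<longrightarrow> w < nv h"
    and v: "v < nv (du g h)" and o: "out (du g h) v = Some w"
  show "w < nv (du g h)"
  proof (cases "v < nv g")
    case True then have "w < nv g" using tg o by (simp add: out_du)
    then show ?thesis by simp
  next
    case False
    then obtain w' where "out h (v - nv g) = Some w'" "w = w' + nv g" using o by (auto simp: out_du)
    moreover have "v - nv g < nv h" using v False by simp
    ultimately show ?thesis using th by simp
  qed
qed

lemma Field_sh: "Field (map_prod (\<lambda>x. x + k) (\<lambda>x. x + k) ` R) \<subseteq> {k::nat..}"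
  by (auto simp: Field_def)

context
  fixes g h :: "'c gr"
  assumes tg: "targets_ok g" and th: "targets_ok h"
begin

lemma conn_du_left:
  assumes "x < nv g"
  shows "(x, y) \<in> (E (du g h))\<^sup>* \<longleftrightarrow> (x, y) \<in> (E g)\<^sup>*"
proof
  assume "(x, y) \<in> (E (du g h))\<^sup>*"
  then have a: "(x, y) \<in> (E g \<union> map_prod (\<lambda>x. x + nv g) (\<lambda>x. x + nv g) ` E h)\<^sup>*" unfolding E_du .
  have d: "Field (map_prod (\<lambda>x. x + nv g) (\<lambda>x. x + nv g) ` E h) \<inter> {..<nv g} = {}"
    using Field_sh[of "nv g" "E h"] by fastforce
  have x: "x \<in> {..<nv g}" using assms by simp
  show "(x, y) \<in> (E g)\<^sup>*" by (rule rtrancl_Un_sep[OF a x Field_E[OF tg] d])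
next
  assume "(x, y) \<in> (E g)\<^sup>*"
  then show "(x, y) \<in> (E (du g h))\<^sup>*" unfolding E_du using rtrancl_mono[of "E g" "E g \<union> _"] by blast
qed

lemma conn_du_right:
  assumes "x < nv h"
  shows "(x + nv g, y) \<in> (E (du g h))\<^sup>* \<longleftrightarrow> (\<exists>y'. y = y' + nv g \<and> (x, y') \<in> (E h)\<^sup>*)"
proof
  assume "(x + nv g, y) \<in> (E (du g h))\<^sup>*"
  then have "(x + nv g, y) \<in> (map_prod (\<lambda>x. x + nv g) (\<lambda>x. x + nv g) ` E h \<union> E g)\<^sup>*"
    unfolding E_du by (subst Un_commute)
  note a = this
  have d: "Field (E g) \<inter> {nv g..} = {}"
    using Field_E[OF tg] by fastforce
  have x: "x + nv g \<in> {nv g..}" by simp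
  have "(x + nv g, y) \<in> (map_prod (\<lambda>x. x + nv g) (\<lambda>x. x + nv g) ` E h)\<^sup>*"
    by (rule rtrancl_Un_sep[OF a x Field_sh d])
  then show "\<exists>y'. y = y' + nv g \<and> (x, y') \<in> (E h)\<^sup>*"
    by (rule rtrancl_map_prod_inv[where D=UNIV]) (simp_all add: inj_on_def)
next
  assume "\<exists>y'. y = y' + nv g \<and> (x, y') \<in> (E h)\<^sup>*"
  then obtain y' where y': "y = y' + nv g" "(x, y') \<in> (E h)\<^sup>*" by blast
  have "(x + nv g, y) \<in> (map_prod (\<lambda>x. x + nv g) (\<lambda>x. x + nv g) ` E h)\<^sup>*"
    using rtrancl_map_prod[OF y'(2), of "\<lambda>x. x + nv g"] y'(1) by simp
  moreover have "map_prod (\<lambda>x. x + nv g) (\<lambda>x. x + nv g) ` E h \<subseteq> E (du g h)"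
    unfolding E_du by (rule Un_upper2)
  ultimately show "(x + nv g, y) \<in> (E (du g h))\<^sup>*"
    using rtrancl_mono by blast
qed

lemma comp_du_left: "x < nv g \<Longrightarrow> comp (du g h) x = comp g x"
proof -
  assume x: "x < nv g"
  have "y < nv g" if "(x, y) \<in> (E g)\<^sup>*" for y
    using rtrancl_stays[OF that, of "{..<nv g}"] Field_E[OF tg] x by auto
  note lt = this
  have lt2: "y < nv g + nv h" if "(x, y) \<in> (E g)\<^sup>*" for y using lt[OF that] by simp
  show ?thesis unfolding comp_alt using conn_du_left[OF x] lt lt2 by auto
qed

lemma comp_du_right: "x < nv h \<Longrightarrow> comp (du g h) (x + nv g) = (\<lambda>y. y + nv g) ` comp h x"
proof -
  assume x: "x < nv h"
  have lt: "y < nv h" if "(x, y) \<in> (E h)\<^sup>*" for y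
    using rtrancl_stays[OF that, of "{..<nv h}"] Field_E[OF th] x by auto
  show ?thesis
  proof (intro set_eqI iffI)
    fix y assume "y \<in> comp (du g h) (x + nv g)"
    then obtain y' where "y = y' + nv g" "(x, y') \<in> (E h)\<^sup>*"
      unfolding comp_alt using conn_du_right[OF x] by blast
    then show "y \<in> (\<lambda>y. y + nv g) ` comp h x" using lt unfolding comp_alt by blast
  next
    fix y assume "y \<in> (\<lambda>y. y + nv g) ` comp h x"
    then obtain y' where y': "y = y' + nv g" "(x, y') \<in> (E h)\<^sup>*" "y' < nv h"
      unfolding comp_alt by blast
    then have "(x + nv g, y) \<in> (E (du g h))\<^sup>*" using conn_du_right[OF x] by blast
    then show "y \<in> comp (du g h) (x + nv g)" using y' unfolding comp_alt by simp
  qed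
qed

lemma comps_du: "comps (du g h) = comps g \<union> image (\<lambda>y. y + nv g) ` comps h"
proof (intro set_eqI iffI)
  fix C assume "C \<in> comps (du g h)"
  then obtain x where x: "x < nv g + nv h" "C = comp (du g h) x" by (auto simp: comps_def)
  show "C \<in> comps g \<union> image (\<lambda>y. y + nv g) ` comps h"
  proof (cases "x < nv g")
    case True then show ?thesis using x comp_du_left by (auto simp: comps_def)
  next
    case False
    then have "x = (x - nv g) + nv g" "x - nv g < nv h" using x by auto
    then have "C = (\<lambda>y. y + nv g) ` comp h (x - nv g)" using x comp_du_right by metis
    then show ?thesis using \<open>x - nv g < nv h\<close> by (auto simp: comps_def)
  qed
next
  fix C assume "C \<in> comps g \<union> image (\<lambda>y. y + nv g) ` comps h"
  then consider x where "x < nv g" "C = comp g x" | x where "x < nv h" "C = (\<lambda>y. y + nv g) ` comp h x"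
    by (auto simp: comps_def)
  then show "C \<in> comps (du g h)"
  proof cases
    case 1 then show ?thesis using comp_du_left[of x] comp_in_comps[of x "du g h"] by simp
  next
    case 2 then show ?thesis using comp_du_right[of x] comp_in_comps[of "x + nv g" "du g h"] by simp
  qed
qed

lemma fert_du_left: "w < nv g \<Longrightarrow> fert (du g h) w = fert g w"
proof -
  assume w: "w < nv g"
  have "{u. u < nv (du g h) \<and> out (du g h) u = Some w} = {u. u < nv g \<and> out g u = Some w}"
    using w by (auto simp: out_du)
  then show ?thesis by (simp add: fert_def)
qed

lemma fert_du_right: "w < nv h \<Longrightarrow> fert (du g h) (w + nv g) = fert h w"
proof -
  assume w: "w < nv h"
  have "{u. u < nv (du g h) \<and> out (du g h) u = Some (w + nv g)} =
        (\<lambda>u. u + nv g) ` {u. u < nv h \<and> out h u = Some w}"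
  proof (intro set_eqI iffI)
    fix u assume u: "u \<in> {u. u < nv (du g h) \<and> out (du g h) u = Some (w + nv g)}"
    show "u \<in> (\<lambda>u. u + nv g) ` {u. u < nv h \<and> out h u = Some w}"
    proof (cases "u < nv g")
      case True
      then have "out g u = Some (w + nv g)" using u by (simp add: out_du)
      then show ?thesis using tg True unfolding targets_ok_def by fastforce
    next
      case False
      then have "out h (u - nv g) = Some w" "u - nv g < nv h" using u by (auto simp: out_du)
      then show ?thesis using False by (intro image_eqI[of _ _ "u - nv g"]) auto
    qed
  next
    fix u assume "u \<in> (\<lambda>u. u + nv g) ` {u. u < nv h \<and> out h u = Some w}"
    then show "u \<in> {u. u < nv (du g h) \<and> out (du g h) u = Some (w + nv g)}"
      by (auto simp: out_du)
  qed
  then show ?thesis by (simp add: fert_def card_image)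
qed

lemma vmon_du_left: "C \<subseteq> {..<nv g} \<Longrightarrow> vmon (du g h) C = vmon g C"
  unfolding vmon_def by (intro sum.cong) (auto simp: dec_du fert_du_left)

lemma vmon_du_right: "C \<subseteq> {..<nv h} \<Longrightarrow> vmon (du g h) ((\<lambda>y. y + nv g) ` C) = vmon h C"
  unfolding vmon_def by (subst sum.reindex) (auto simp: inj_on_def dec_du fert_du_right intro!: sum.cong)

lemma comps_du_disj: "comps g \<inter> image (\<lambda>y. y + nv g) ` comps h = {}"
proof -
  have "False" if "C \<in> comps g" "C \<in> image (\<lambda>y. y + nv g) ` comps h" for C
  proof -
    from comps_nonempty[OF that(1)] obtain x where "x \<in> C" by blast
    then show False using that comps_sub[of C g] by auto
  qed
  then show ?thesis by blast
qed

lemma inj_sh_img: "inj_on (image (\<lambda>y. y + (k::nat))) X"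
  by (rule inj_on_subset[OF inj_on_image[of _ UNIV]]) (auto simp: inj_on_def)

lemma mset_du:
  "image_mset f (mset_set (comps (du g h))) =
     image_mset f (mset_set (comps g)) + image_mset (f \<circ> image (\<lambda>y. y + nv g)) (mset_set (comps h))"
  unfolding comps_du
  by (simp add: mset_set_Union comps_du_disj image_mset_mset_set[OF inj_sh_img, symmetric]
       image_mset.compositionality)

lemma phiA_du: "phiA_gr (du g h) = phiA_gr g + phiA_gr h"
proof -
  have "phiA_gr (du g h) = image_mset (vmon (du g h)) (mset_set (comps g)) +
      image_mset (vmon (du g h) \<circ> image (\<lambda>y. y + nv g)) (mset_set (comps h))"
    unfolding phiA_gr_def mset_du ..
  also have "image_mset (vmon (du g h)) (mset_set (comps g)) = phiA_gr g"
    unfolding phiA_gr_def by (rule image_mset_cong) (simp add: vmon_du_left comps_sub)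
  also have "image_mset (vmon (du g h) \<circ> image (\<lambda>y. y + nv g)) (mset_set (comps h)) = phiA_gr h"
    unfolding phiA_gr_def by (rule image_mset_cong) (simp add: vmon_du_right comps_sub)
  finally show ?thesis .
qed

end


lemma atree_root: "is_atree g \<Longrightarrow> root g < nv g \<and> out g (root g) = None"
  unfolding is_atree_def root_def by (metis (mono_tags, lifting) theI')

lemma atree_root_unique: "is_atree g \<Longrightarrow> x < nv g \<Longrightarrow> out g x = None \<Longrightarrow> x = root g"
  using atree_root[of g] unfolding is_atree_def by blast

lemma atree_targets: "is_atree g \<Longrightarrow> targets_ok g"
  by (simp add: is_atree_def)

lemma atreeI:
  assumes "targets_ok g" "r < nv g" "out g r = None" "\<And>x. x < nv g \<Longrightarrow> out g x = None \<Longrightarrow> x = r"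
  shows "is_atree g \<and> root g = r"
proof
  have ex: "\<exists>!r. r < nv g \<and> out g r = None" using assms(2,3,4) by (intro ex1I[of _ r]) blast+
  then show "is_atree g" using assms(1) by (simp add: is_atree_def)
  show "root g = r" unfolding root_def by (rule the_equality) (use assms(2,3,4) in blast)+
qed

lemma inj_shift_img: "inj_on (image (\<lambda>y. y + (k::nat))) X"
  by (rule inj_on_subset[OF inj_on_image[of _ UNIV]]) (auto simp: inj_on_def)

lemma mset_img_union:
  assumes "finite A" "finite B" "A \<inter> image (\<lambda>y. y + k) ` B = {}"
  shows "image_mset f (mset_set (A \<union> image (\<lambda>y. y + (k::nat)) ` B)) =
    image_mset f (mset_set A) + image_mset (f \<circ> image (\<lambda>y. y + k)) (mset_set B)"
proof -
  have "mset_set (image (\<lambda>y. y + k) ` B) = image_mset (image (\<lambda>y. y + k)) (mset_set B)"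
    by (rule image_mset_mset_set[OF inj_shift_img, symmetric])
  then show ?thesis using assms by (simp add: mset_set_Union image_mset.compositionality)
qed

context
  fixes g h :: "'c gr"
  assumes mg: "is_multiaroma g" and ah: "is_atree h"
begin

lemma tg': "targets_ok g" using mg by (simp add: is_multiaroma_def)
lemma th': "targets_ok h" using ah by (simp add: is_atree_def)

lemma root_du: "is_atree (du g h) \<and> root (du g h) = root h + nv g"
proof (rule atreeI)
  show "targets_ok (du g h)" by (rule targets_du[OF tg' th'])
  show "root h + nv g < nv (du g h)" using atree_root[OF ah] by simp
  show "out (du g h) (root h + nv g) = None" using atree_root[OF ah] by (simp add: out_du)
  fix x assume x: "x < nv (du g h)" "out (du g h) x = None"
  show "x = root h + nv g"
  proof (cases "x < nv g")
    case True
    then have "out g x = None" using x by (simp add: out_du)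
    moreover have "out g x \<noteq> None" using mg True unfolding is_multiaroma_def by blast
    ultimately show ?thesis by contradiction
  next
    case False
    then have "out h (x - nv g) = None" "x - nv g < nv h" using x by (auto simp: out_du)
    then have "x - nv g = root h" using atree_root_unique[OF ah] by blast
    then show ?thesis using False by simp
  qed
qed

lemma phiAT_du: "phiAT_gr (du g h) = (phiA_gr g + fst (phiAT_gr h), snd (phiAT_gr h))"
proof -
  have rl: "root h < nv h" using atree_root[OF ah] by simp
  have rc: "comp (du g h) (root (du g h)) = (\<lambda>y. y + nv g) ` comp h (root h)"
    using root_du comp_du_right[OF tg' th' rl] by simp
  have Rh: "comp h (root h) \<in> comps h" using rl by (rule comp_in_comps)
  have "comps (du g h) - {comp (du g h) (root (du g h))} = comps g \<union> image (\<lambda>y. y + nv g) ` (comps h - {comp h (root h)})"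
    unfolding comps_du[OF tg' th'] rc using comps_du_disj[OF tg' th'] inj_shift_img[where k="nv g" and X="comps h"] Rh
    by (auto dest: inj_onD)
  moreover have "comps g \<inter> image (\<lambda>y. y + nv g) ` (comps h - {comp h (root h)}) = {}"
    using comps_du_disj[OF tg' th'] by blast
  ultimately have "fst (phiAT_gr (du g h)) = image_mset (vmon (du g h)) (mset_set (comps g)) +
     image_mset (vmon (du g h) \<circ> image (\<lambda>y. y + nv g)) (mset_set (comps h - {comp h (root h)}))"
    unfolding phiAT_gr_def fst_conv by (simp add: mset_img_union)
  also have "image_mset (vmon (du g h)) (mset_set (comps g)) = phiA_gr g"
    unfolding phiA_gr_def by (rule image_mset_cong) (simp add: vmon_du_left[OF tg' th'] comps_sub)
  also have "image_mset (vmon (du g h) \<circ> image (\<lambda>y. y + nv g)) (mset_set (comps h - {comp h (root h)})) = fst (phiAT_gr h)"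
    unfolding phiAT_gr_def fst_conv by (rule image_mset_cong) (simp add: vmon_du_right[OF tg' th'] comps_sub)
  finally have 1: "fst (phiAT_gr (du g h)) = phiA_gr g + fst (phiAT_gr h)" .
  have 2: "snd (phiAT_gr (du g h)) = snd (phiAT_gr h)"
    unfolding phiAT_gr_def snd_conv rc using vmon_du_right[OF tg' th' comp_sub] .
  show ?thesis using 1 2 by (simp add: prod_eq_iff)
qed

end

lemma phiA_nv0: "nv g = 0 \<Longrightarrow> phiA_gr g = {#}"
  by (simp add: phiA_gr_def comps_def)


definition vinc :: "'c gr \<Rightarrow> nat set \<Rightarrow> nat \<Rightarrow> 'c mon" where
  "vinc h C v = vmon h (C - {v}) + Poly_Mapping.single (dec h v, Suc (fert h v)) 1"

lemma nv_att[simp]: "nv (attach g h v) = nv g + nv h"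
  by (simp add: attach_def Let_def)
lemma dec_att: "dec (attach g h v) = dec (du g h)"
  by (simp add: attach_def Let_def)
lemma out_att: "out (attach g h v) = (out (du g h))(root g := Some (nv g + v))"
  by (simp add: attach_def Let_def)

context
  fixes g h :: "'c gr" and v :: nat
  assumes ag: "is_atree g" and th: "targets_ok h" and vl: "v < nv h"
begin

lemma tg: "targets_ok g" using ag by (rule atree_targets)
lemma rt: "root g < nv g" "out g (root g) = None" using atree_root[OF ag] by auto

lemma outD_r: "out (du g h) (root g) = None" using rt by (simp add: out_du)

lemma edges_att: "edges (attach g h v) = edges (du g h) \<union> {(root g, nv g + v)}"
proof (intro set_eqI iffI)
  fix e assume "e \<in> edges (attach g h v)"
  then obtain x y where e: "e = (x, y)" "x < nv g + nv h" "out (attach g h v) x = Some y"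
    by (auto simp: edges_def)
  show "e \<in> edges (du g h) \<union> {(root g, nv g + v)}"
  proof (cases "x = root g")
    case True then show ?thesis using e by (simp add: out_att)
  next
    case False then show ?thesis using e by (simp add: out_att edges_def)
  qed
next
  fix e assume e: "e \<in> edges (du g h) \<union> {(root g, nv g + v)}"
  show "e \<in> edges (attach g h v)"
  proof (cases "e = (root g, nv g + v)")
    case True then show ?thesis using rt by (simp add: edges_def out_att)
  next
    case False
    then have "e \<in> edges (du g h)" using e by blast
    then obtain x y where xy: "e = (x, y)" "x < nv g + nv h" "out (du g h) x = Some y" by (auto simp: edges_def)
    then have "x \<noteq> root g" using outD_r by auto
    then show ?thesis using xy by (simp add: edges_def out_att)
  qed
qed

lemma E_att: "E (attach g h v) = E (du g h) \<union> {(root g, nv g + v), (nv g + v, root g)}"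
  unfolding E_def edges_att by auto

abbreviation "SD \<equiv> (E (du g h))\<^sup>*"
abbreviation "KK \<equiv> comp (du g h) (root g) \<union> comp (du g h) (nv g + v)"

lemma conn_att: "(x, y) \<in> (E (attach g h v))\<^sup>* \<longleftrightarrow>
   (x, y) \<in> SD \<or> ((x, root g) \<in> SD \<and> (nv g + v, y) \<in> SD) \<or> ((x, nv g + v) \<in> SD \<and> (root g, y) \<in> SD)"
  unfolding E_att by (rule rtrancl_add_edge_iff[OF sym_E])

lemma comp_att: "x < nv g + nv h \<Longrightarrow> comp (attach g h v) x = (if x \<in> KK then KK else comp (du g h) x)"
proof -
  assume x: "x < nv g + nv h"
  have sy: "(a, b) \<in> SD \<Longrightarrow> (b, a) \<in> SD" for a b by (rule sym_conn)
  have tr: "(a, b) \<in> SD \<Longrightarrow> (b, c) \<in> SD \<Longrightarrow> (a, c) \<in> SD" for a b c by (rule rtrancl_trans)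
  have ca: "comp (attach g h v) x = {y. y < nv g + nv h \<and> ((x, y) \<in> SD \<or> ((x, root g) \<in> SD \<and> (nv g + v, y) \<in> SD) \<or> ((x, nv g + v) \<in> SD \<and> (root g, y) \<in> SD))}"
    unfolding comp_alt conn_att by simp
  have cd: "comp (du g h) z = {y. y < nv g + nv h \<and> (z, y) \<in> SD}" for z
    unfolding comp_alt by simp
  show ?thesis
  proof (cases "x \<in> KK")
    case True
    then have "(root g, x) \<in> SD \<or> (nv g + v, x) \<in> SD" unfolding cd by blast
    then have "(x, root g) \<in> SD \<or> (x, nv g + v) \<in> SD" using sy by blast
    then have "comp (attach g h v) x = KK" unfolding ca cd using sy tr by blast
    then show ?thesis using True by simp
  next
    case False
    then have "(root g, x) \<notin> SD" "(nv g + v, x) \<notin> SD" using x unfolding cd by blast+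
    then have "(x, root g) \<notin> SD" "(x, nv g + v) \<notin> SD" using sy by blast+
    then have "comp (attach g h v) x = comp (du g h) x" unfolding ca cd by blast
    then show ?thesis using False by simp
  qed
qed

lemma rlt: "root g < nv g + nv h" using rt by simp
lemma nvlt: "nv g + v < nv g + nv h" using vl by simp

lemma comps_att: "comps (attach g h v) = (comps (du g h) - {comp (du g h) (root g), comp (du g h) (nv g + v)}) \<union> {KK}"
proof (intro set_eqI iffI)
  fix C assume "C \<in> comps (attach g h v)"
  then obtain x where x: "x < nv g + nv h" "C = comp (attach g h v) x" by (auto simp: comps_def)
  show "C \<in> (comps (du g h) - {comp (du g h) (root g), comp (du g h) (nv g + v)}) \<union> {KK}"
  proof (cases "x \<in> KK")
    case True then show ?thesis using x comp_att by simp
  next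
    case False
    then have "comp (du g h) x \<noteq> comp (du g h) (root g)" "comp (du g h) x \<noteq> comp (du g h) (nv g + v)"
      using comp_self[of x "du g h"] x by auto
    moreover have "comp (du g h) x \<in> comps (du g h)" using x by (intro comp_in_comps) simp
    ultimately show ?thesis using x comp_att False by simp
  qed
next
  fix C assume C: "C \<in> (comps (du g h) - {comp (du g h) (root g), comp (du g h) (nv g + v)}) \<union> {KK}"
  show "C \<in> comps (attach g h v)"
  proof (cases "C = KK")
    case True
    have "root g \<in> KK" using comp_self[of "root g" "du g h"] rlt by simp
    then have "comp (attach g h v) (root g) = KK" using comp_att[OF rlt] by simp
    then show ?thesis using True rlt comp_in_comps[of "root g" "attach g h v"] by simp
  next
    case False
    then have C1: "C \<in> comps (du g h)" "C \<noteq> comp (du g h) (root g)" "C \<noteq> comp (du g h) (nv g + v)" using C by auto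
    then obtain x where x: "x < nv g + nv h" "C = comp (du g h) x" by (auto simp: comps_def)
    have "x \<notin> KK"
    proof
      assume "x \<in> KK"
      then have "comp (du g h) x = comp (du g h) (root g) \<or> comp (du g h) x = comp (du g h) (nv g + v)"
        using comp_eq by blast
      then show False using C1 x by blast
    qed
    then have "comp (attach g h v) x = C" using comp_att[OF x(1)] x by simp
    then show ?thesis using x(1) comp_in_comps[of x "attach g h v"] by simp
  qed
qed

lemma compD_r: "comp (du g h) (root g) = comp g (root g)"
  using comp_du_left[OF tg th rt(1)] .

lemma compD_v: "comp (du g h) (nv g + v) = (\<lambda>y. y + nv g) ` comp h v"
  using comp_du_right[OF tg th vl] by (simp add: add.commute)

abbreviation "Rg \<equiv> comp g (root g)"
abbreviation "Cv \<equiv> comp h v"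
abbreviation "KK' \<equiv> Rg \<union> (\<lambda>y. y + nv g) ` Cv"

lemma Rg_in: "Rg \<in> comps g" using rt(1) by (rule comp_in_comps)
lemma Cv_in: "Cv \<in> comps h" using vl by (rule comp_in_comps)

lemma comps_att2: "comps (attach g h v) = (comps g - {Rg}) \<union> image (\<lambda>y. y + nv g) ` (comps h - {Cv}) \<union> {KK'}"
proof -
  have i: "inj_on (image (\<lambda>y. y + nv g)) (comps h)" by (rule inj_shift_img)
  have "comps (du g h) - {Rg, (\<lambda>y. y + nv g) ` Cv} = (comps g - {Rg}) \<union> image (\<lambda>y. y + nv g) ` (comps h - {Cv})"
  proof -
    have 1: "image (\<lambda>y. y + nv g) ` (comps h - {Cv}) = image (\<lambda>y. y + nv g) ` comps h - {(\<lambda>y. y + nv g) ` Cv}"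
      using inj_on_image_set_diff[OF i, of "comps h" "{Cv}"] Cv_in by simp
    have 2: "(\<lambda>y. y + nv g) ` Cv \<notin> comps g" using comps_du_disj[OF tg th] Cv_in by blast
    have 3: "Rg \<notin> image (\<lambda>y. y + nv g) ` comps h" using comps_du_disj[OF tg th] Rg_in by blast
    have "(comps g \<union> image (\<lambda>y. y + nv g) ` comps h) - {Rg, (\<lambda>y. y + nv g) ` Cv} =
        (comps g - {Rg}) \<union> (image (\<lambda>y. y + nv g) ` comps h - {(\<lambda>y. y + nv g) ` Cv})"
      using 2 3 by blast
    then show ?thesis unfolding comps_du[OF tg th] 1 .
  qed
  then show ?thesis unfolding comps_att compD_r compD_v by simp
qed

lemma fert_att: "w < nv g + nv h \<Longrightarrow> fert (attach g h v) w = fert (du g h) w + (if w = nv g + v then 1 else 0)"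
proof -
  assume w: "w < nv g + nv h"
  let ?S = "{u. u < nv g + nv h \<and> out (du g h) u = Some w}"
  have fin: "finite ?S" by simp
  have rS: "root g \<notin> ?S" using outD_r by simp
  have "{u. u < nv (attach g h v) \<and> out (attach g h v) u = Some w} = ?S \<union> (if w = nv g + v then {root g} else {})"
    using rlt outD_r by (auto simp: out_att)
  then show ?thesis using fin rS by (cases "w = nv g + v") (simp_all add: fert_def)
qed

lemma vmon_att: "S \<subseteq> {..<nv g + nv h} \<Longrightarrow> nv g + v \<notin> S \<Longrightarrow> vmon (attach g h v) S = vmon (du g h) S"
  unfolding vmon_def by (intro sum.cong refl) (auto simp: dec_att fert_att)

lemma vmon_KK: "vmon (attach g h v) KK' = vmon g Rg + vinc h Cv v"
proof -
  have d: "Rg \<inter> (\<lambda>y. y + nv g) ` Cv = {}" using comp_sub[of g "root g"] by auto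
  have "vmon (attach g h v) KK' = vmon (attach g h v) Rg + vmon (attach g h v) ((\<lambda>y. y + nv g) ` Cv)"
    unfolding vmon_def by (rule sum.union_disjoint) (auto simp: d)
  also have "vmon (attach g h v) Rg = vmon g Rg"
  proof -
    have s: "Rg \<subseteq> {..<nv g}" by (rule comp_sub)
    then have "nv g + v \<notin> Rg" by auto
    moreover have "Rg \<subseteq> {..<nv g + nv h}" using s by auto
    ultimately show ?thesis using vmon_att[of Rg] vmon_du_left[OF tg th s] by simp
  qed
  also have "vmon (attach g h v) ((\<lambda>y. y + nv g) ` Cv) =
      (\<Sum>u\<in>Cv. Poly_Mapping.single (dec h u, fert h u + (if u = v then 1 else 0)) 1)"
  proof -
    have "vmon (attach g h v) ((\<lambda>y. y + nv g) ` Cv) = (\<Sum>u\<in>Cv. Poly_Mapping.single (dec (attach g h v) (u + nv g), fert (attach g h v) (u + nv g)) 1)"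
      unfolding vmon_def by (subst sum.reindex) (auto simp: inj_on_def)
    also have "\<dots> = (\<Sum>u\<in>Cv. Poly_Mapping.single (dec h u, fert h u + (if u = v then 1 else 0)) 1)"
    proof (rule sum.cong[OF refl])
      fix u assume u: "u \<in> Cv"
      then have ul: "u < nv h" using comp_sub by blast
      show "Poly_Mapping.single (dec (attach g h v) (u + nv g), fert (attach g h v) (u + nv g)) 1 =
          Poly_Mapping.single (dec h u, fert h u + (if u = v then 1 else 0)) 1"
        using ul fert_att[of "u + nv g"] fert_du_right[OF tg th ul] by (simp add: dec_att dec_du add.commute)
    qed
    finally show ?thesis .
  qed
  also have "\<dots> = vinc h Cv v"
  proof -
    have vC: "v \<in> Cv" using vl by (rule comp_self)
    have "(\<Sum>u\<in>Cv. Poly_Mapping.single (dec h u, fert h u + (if u = v then 1 else 0)) 1) =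
        Poly_Mapping.single (dec h v, fert h v + 1) 1 + (\<Sum>u\<in>Cv - {v}. Poly_Mapping.single (dec h u, fert h u + (if u = v then 1 else 0)) 1)"
      using vC by (subst sum.remove) auto
    also have "(\<Sum>u\<in>Cv - {v}. Poly_Mapping.single (dec h u, fert h u + (if u = v then 1 else 0)) 1) = vmon h (Cv - {v})"
      unfolding vmon_def by (rule sum.cong) auto
    finally show ?thesis by (simp add: vinc_def add.commute)
  qed
  finally show ?thesis .
qed

lemma KK'_notin: "KK' \<notin> (comps g - {Rg}) \<union> image (\<lambda>y. y + nv g) ` X"
proof
  assume a: "KK' \<in> (comps g - {Rg}) \<union> image (\<lambda>y. y + nv g) ` X"
  have r: "root g \<in> KK'" using comp_self[OF rt(1)] by simp
  have n: "nv g + v \<in> KK'" using comp_self[OF vl] by (auto simp: add.commute)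
  from a show False
  proof
    assume "KK' \<in> comps g - {Rg}"
    then show False using n comps_sub[of KK' g] by auto
  next
    assume "KK' \<in> image (\<lambda>y. y + nv g) ` X"
    then obtain Y where "KK' = (\<lambda>y. y + nv g) ` Y" by blast
    then obtain y where "root g = y + nv g" using r by blast
    then show False using rt(1) by simp
  qed
qed

lemma mset_part:
  assumes X: "X \<subseteq> comps h - {Cv}"
  shows "image_mset (vmon (attach g h v)) (mset_set ((comps g - {Rg}) \<union> image (\<lambda>y. y + nv g) ` X)) =
     fst (phiAT_gr g) + image_mset (vmon h) (mset_set X)"
proof -
  have fX: "finite X" using X finite_subset[OF _ finite_comps] by blast
  have d: "(comps g - {Rg}) \<inter> image (\<lambda>y. y + nv g) ` X = {}" using comps_du_disj[OF tg th] X by blast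
  have "image_mset (vmon (attach g h v)) (mset_set ((comps g - {Rg}) \<union> image (\<lambda>y. y + nv g) ` X)) =
    image_mset (vmon (attach g h v)) (mset_set (comps g - {Rg})) + image_mset (vmon (attach g h v) \<circ> image (\<lambda>y. y + nv g)) (mset_set X)"
    by (rule mset_img_union) (use fX d in auto)
  also have "image_mset (vmon (attach g h v)) (mset_set (comps g - {Rg})) = fst (phiAT_gr g)"
    unfolding phiAT_gr_def fst_conv
  proof (rule image_mset_cong)
    fix C assume "C \<in># mset_set (comps g - {Rg})"
    then have C: "C \<in> comps g" by simp
    then have "C \<subseteq> {..<nv g}" by (rule comps_sub)
    then show "vmon (attach g h v) C = vmon g C"
      using vmon_att[of C] vmon_du_left[OF tg th, of C] by force
  qed
  also have "image_mset (vmon (attach g h v) \<circ> image (\<lambda>y. y + nv g)) (mset_set X) = image_mset (vmon h) (mset_set X)"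
  proof (rule image_mset_cong)
    fix C assume "C \<in># mset_set X"
    then have C: "C \<in> comps h" "C \<noteq> Cv" using X fX by auto
    then have Cs: "C \<subseteq> {..<nv h}" by (intro comps_sub)
    have "v \<notin> C" using C comps_in by blast
    then have "nv g + v \<notin> (\<lambda>y. y + nv g) ` C" by auto
    moreover have "(\<lambda>y. y + nv g) ` C \<subseteq> {..<nv g + nv h}" using Cs by auto
    ultimately show "(vmon (attach g h v) \<circ> image (\<lambda>y. y + nv g)) C = vmon h C"
      using vmon_att vmon_du_right[OF tg th Cs] by simp
  qed
  finally show ?thesis .
qed

lemma phiA_att: "phiA_gr (attach g h v) =
   fst (phiAT_gr g) + image_mset (vmon h) (mset_set (comps h - {Cv})) + {# snd (phiAT_gr g) + vinc h Cv v #}"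
proof -
  have "phiA_gr (attach g h v) = image_mset (vmon (attach g h v)) (mset_set (insert KK' ((comps g - {Rg}) \<union> image (\<lambda>y. y + nv g) ` (comps h - {Cv}))))"
    unfolding phiA_gr_def comps_att2 by simp
  also have "\<dots> = add_mset (vmon (attach g h v) KK') (image_mset (vmon (attach g h v)) (mset_set ((comps g - {Rg}) \<union> image (\<lambda>y. y + nv g) ` (comps h - {Cv}))))"
    using KK'_notin by simp
  also have "\<dots> = fst (phiAT_gr g) + image_mset (vmon h) (mset_set (comps h - {Cv})) + {# snd (phiAT_gr g) + vinc h Cv v #}"
    unfolding mset_part[OF subset_refl] vmon_KK by (simp add: phiAT_gr_def)
  finally show ?thesis .
qed

end


lemma targets_att:
  assumes ag: "is_atree g" and th: "targets_ok h" and vl: "v < nv h"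
  shows "targets_ok (attach g h v)"
  unfolding targets_ok_def
proof (intro allI impI)
  fix x y assume x: "x < nv (attach g h v)" and o: "out (attach g h v) x = Some y"
  show "y < nv (attach g h v)"
  proof (cases "x = root g")
    case True then show ?thesis using o vl by (simp add: out_att)
  next
    case False
    then have "out (du g h) x = Some y" using o by (simp add: out_att)
    then show ?thesis using targets_du[OF tg[OF ag th vl] th] x unfolding targets_ok_def by simp
  qed
qed

context
  fixes g h :: "'c gr" and v :: nat
  assumes ag: "is_atree g" and ah: "is_atree h" and vl: "v < nv h"
begin

lemma th2: "targets_ok h" using ah by (rule atree_targets)

lemma root_att: "is_atree (attach g h v) \<and> root (attach g h v) = root h + nv g"
proof (rule atreeI)
  show "targets_ok (attach g h v)" by (rule targets_att[OF ag th2 vl])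
  have rh: "root h < nv h" "out h (root h) = None" using atree_root[OF ah] by auto
  have rg: "root g < nv g" using atree_root[OF ag] by auto
  show "root h + nv g < nv (attach g h v)" using rh by simp
  show "out (attach g h v) (root h + nv g) = None" using rh rg by (simp add: out_att out_du)
  fix x assume x: "x < nv (attach g h v)" "out (attach g h v) x = None"
  then have xr: "x \<noteq> root g" by (auto simp: out_att)
  then have o: "out (du g h) x = None" using x by (simp add: out_att)
  show "x = root h + nv g"
  proof (cases "x < nv g")
    case True
    then have "out g x = None" using o by (simp add: out_du)
    then have "x = root g" using atree_root_unique[OF ag True] by simp
    then show ?thesis using xr by simp
  next
    case False
    then have "out h (x - nv g) = None" "x - nv g < nv h" using x o by (auto simp: out_du)
    then have "x - nv g = root h" using atree_root_unique[OF ah] by blast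
    then show ?thesis using False by simp
  qed
qed

abbreviation "Rh \<equiv> comp h (root h)"

lemma phiAT_att: "phiAT_gr (attach g h v) =
  (if comp h v = Rh then (fst (phiAT_gr g) + fst (phiAT_gr h), snd (phiAT_gr g) + vinc h Rh v)
   else (fst (phiAT_gr g) + image_mset (vmon h) (mset_set (comps h - {Rh} - {comp h v})) + {# snd (phiAT_gr g) + vinc h (comp h v) v #},
         snd (phiAT_gr h)))"
proof -
  note th = th2
  have rh: "root h < nv h" using atree_root[OF ah] by auto
  have rg: "root g < nv g" using atree_root[OF ag] by auto
  have Rh_in: "Rh \<in> comps h" using rh by (rule comp_in_comps)
  let ?K = "comp g (root g) \<union> (\<lambda>y. y + nv g) ` comp h v"
  have rA: "root (attach g h v) = root h + nv g" using root_att by simp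
  have rlt: "root h + nv g < nv g + nv h" using rh by simp
  have inK: "root h + nv g \<in> comp (du g h) (root g) \<union> comp (du g h) (nv g + v) \<longleftrightarrow> comp h v = Rh"
  proof
    assume "root h + nv g \<in> comp (du g h) (root g) \<union> comp (du g h) (nv g + v)"
    then have "root h + nv g \<in> ?K" unfolding compD_r[OF ag th vl] compD_v[OF ag th vl] .
    moreover have "root h + nv g \<notin> comp g (root g)" using comp_sub[of g "root g"] by auto
    ultimately have "root h \<in> comp h v" by auto
    then show "comp h v = Rh" using comp_eq by metis
  next
    assume "comp h v = Rh"
    then have "root h \<in> comp h v" using comp_self[OF rh] by simp
    then show "root h + nv g \<in> comp (du g h) (root g) \<union> comp (du g h) (nv g + v)"
      unfolding compD_v[OF ag th vl] by blast
  qed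
  show ?thesis
  proof (cases "comp h v = Rh")
    case True
    have cA: "comp (attach g h v) (root (attach g h v)) = ?K"
      unfolding rA comp_att[OF ag th vl rlt] using inK True
      by (simp add: compD_r[OF ag th vl] compD_v[OF ag th vl])
    have "comps (attach g h v) - {?K} = (comps g - {comp g (root g)}) \<union> image (\<lambda>y. y + nv g) ` (comps h - {comp h v})"
      unfolding comps_att2[OF ag th vl] using KK'_notin[OF ag th vl] by blast
    then have "fst (phiAT_gr (attach g h v)) = fst (phiAT_gr g) + image_mset (vmon h) (mset_set (comps h - {comp h v}))"
      unfolding phiAT_gr_def fst_conv cA using mset_part[OF ag th vl subset_refl] by (simp add: phiAT_gr_def)
    also have "\<dots> = fst (phiAT_gr g) + fst (phiAT_gr h)" using True by (simp add: phiAT_gr_def)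
    finally have 1: "fst (phiAT_gr (attach g h v)) = fst (phiAT_gr g) + fst (phiAT_gr h)" .
    have 2: "snd (phiAT_gr (attach g h v)) = snd (phiAT_gr g) + vinc h Rh v"
      unfolding phiAT_gr_def snd_conv cA vmon_KK[OF ag th vl] using True by simp
    show ?thesis using 1 2 True by (simp add: prod_eq_iff)
  next
    case False
    have cA: "comp (attach g h v) (root (attach g h v)) = (\<lambda>y. y + nv g) ` Rh"
      unfolding rA comp_att[OF ag th vl rlt] using inK False comp_du_right[OF tg[OF ag th vl] th rh]
      by simp
    have nK: "(\<lambda>y. y + nv g) ` Rh \<noteq> ?K"
    proof
      assume "(\<lambda>y. y + nv g) ` Rh = ?K"
      moreover have "root g \<in> ?K" using comp_self[OF rg] by simp
      ultimately have "root g \<in> (\<lambda>y. y + nv g) ` Rh" by simp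
      then obtain y where "root g = y + nv g" by blast
      then show False using rg by simp
    qed
    have i: "inj_on (image (\<lambda>y. y + nv g)) (comps h)" by (rule inj_shift_img)
    have nG: "(\<lambda>y. y + nv g) ` Rh \<notin> comps g" using comps_du_disj[OF tg[OF ag th vl] th] Rh_in by blast
    have "image (\<lambda>y. y + nv g) ` (comps h - {comp h v}) - {(\<lambda>y. y + nv g) ` Rh} =
        image (\<lambda>y. y + nv g) ` (comps h - {Rh} - {comp h v})"
      using Rh_in i by (auto dest: inj_onD)
    then have cs: "comps (attach g h v) - {(\<lambda>y. y + nv g) ` Rh} =
      insert ?K ((comps g - {comp g (root g)}) \<union> image (\<lambda>y. y + nv g) ` (comps h - {Rh} - {comp h v}))"
      unfolding comps_att2[OF ag th vl] using nK nG by blast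
    have X: "comps h - {Rh} - {comp h v} \<subseteq> comps h - {comp h v}" by blast
    have "fst (phiAT_gr (attach g h v)) = add_mset (vmon (attach g h v) ?K)
        (fst (phiAT_gr g) + image_mset (vmon h) (mset_set (comps h - {Rh} - {comp h v})))"
      unfolding phiAT_gr_def fst_conv cA cs using KK'_notin[OF ag th vl] mset_part[OF ag th vl X]
      by (simp add: phiAT_gr_def)
    then have 1: "fst (phiAT_gr (attach g h v)) = fst (phiAT_gr g) + image_mset (vmon h) (mset_set (comps h - {Rh} - {comp h v})) + {# snd (phiAT_gr g) + vinc h (comp h v) v #}"
      unfolding vmon_KK[OF ag th vl] by (simp add: phiAT_gr_def)
    have vR: "v \<notin> Rh" using False comps_in[OF Rh_in] by blast
    have "vmon (attach g h v) ((\<lambda>y. y + nv g) ` Rh) = vmon (du g h) ((\<lambda>y. y + nv g) ` Rh)"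
      by (rule vmon_att[OF ag th vl]) (use comp_sub[of h "root h"] vR in auto)
    also have "\<dots> = vmon h Rh" by (rule vmon_du_right[OF tg[OF ag th vl] th comp_sub])
    finally have 2: "snd (phiAT_gr (attach g h v)) = snd (phiAT_gr h)"
      unfolding phiAT_gr_def snd_conv cA by simp
    show ?thesis using 1 2 False by (simp add: prod_eq_iff)
  qed
qed

end


lemma sum_single_const: "(\<Sum>u\<in>S. Poly_Mapping.single x (1::'k::field)) = Poly_Mapping.single x (of_nat (card S))"
  by (induction S rule: infinite_finite_induct) (simp_all add: single_add[symmetric] add.commute)

lemma lookup_sum_single: "Poly_Mapping.lookup (\<Sum>u\<in>C. Poly_Mapping.single (key u) (1::nat)) p = card {u\<in>C. key u = p}"
  if "finite C"
  using that by (simp add: lookup_sum lookup_single when_def sum.If_cases) (simp add: Int_def)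

lemma keys_sum_single: "finite C \<Longrightarrow> Poly_Mapping.keys (\<Sum>u\<in>C. Poly_Mapping.single (key u) (1::nat)) = key ` C"
proof -
  assume f: "finite C"
  have "p \<in> Poly_Mapping.keys (\<Sum>u\<in>C. Poly_Mapping.single (key u) (1::nat)) \<longleftrightarrow> p \<in> key ` C" for p
  proof -
    have "p \<in> Poly_Mapping.keys (\<Sum>u\<in>C. Poly_Mapping.single (key u) (1::nat)) \<longleftrightarrow> card {u\<in>C. key u = p} \<noteq> 0"
      unfolding in_keys_iff lookup_sum_single[OF f] by simp
    also have "\<dots> \<longleftrightarrow> {u\<in>C. key u = p} \<noteq> {}" using f by simp
    also have "\<dots> \<longleftrightarrow> p \<in> key ` C" by blast
    finally show ?thesis .
  qed
  then show ?thesis by blast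
qed

lemma dmon_sum:
  fixes key :: "nat \<Rightarrow> 'c \<times> nat"
  assumes f: "finite C"
  defines "\<kappa> \<equiv> (\<Sum>u\<in>C. Poly_Mapping.single (key u) (1::nat))"
  shows "(dmon \<kappa> :: ('c, 'k::field) poly) =
    (\<Sum>u\<in>C. Poly_Mapping.single (\<kappa> - Poly_Mapping.single (key u) 1 + Poly_Mapping.single (fst (key u), Suc (snd (key u))) 1) 1)"
proof -
  let ?F = "\<lambda>p. \<kappa> - Poly_Mapping.single p 1 + Poly_Mapping.single (fst p, Suc (snd p)) 1"
  have "dmon \<kappa> = (\<Sum>p\<in>key ` C. Poly_Mapping.single (?F p) (of_nat (Poly_Mapping.lookup \<kappa> p)) :: ('c, 'k) poly)"
    unfolding dmon_def \<kappa>_def[symmetric] keys_sum_single[OF f, of key, folded \<kappa>_def]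
    by (intro sum.cong refl) (simp add: case_prod_beta)
  also have "\<dots> = (\<Sum>p\<in>key ` C. \<Sum>u\<in>{u\<in>C. key u = p}. Poly_Mapping.single (?F p) 1)"
    by (intro sum.cong refl) (simp only: sum_single_const \<kappa>_def lookup_sum_single[OF f])
  also have "\<dots> = (\<Sum>p\<in>key ` C. \<Sum>u\<in>{u\<in>C. key u = p}. Poly_Mapping.single (?F (key u)) 1)"
    by (intro sum.cong refl) simp
  also have "\<dots> = (\<Sum>u\<in>C. Poly_Mapping.single (?F (key u)) 1)"
    by (rule sum.image_gen[OF f, symmetric])
  finally show ?thesis .
qed

lemma vmon_minus: "finite C \<Longrightarrow> u \<in> C \<Longrightarrow> vmon h C - Poly_Mapping.single (dec h u, fert h u) 1 = vmon h (C - {u})"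
  unfolding vmon_def by (subst sum.remove[of C u]) simp_all

lemma tri_mm_vmon:
  assumes f: "finite C"
  shows "(tri_mm k1 (vmon h C) :: ('c, 'k::field) poly) = (\<Sum>u\<in>C. Poly_Mapping.single (k1 + vinc h C u) 1)"
proof -
  have e: "vmon h C = (\<Sum>u\<in>C. Poly_Mapping.single ((\<lambda>u. (dec h u, fert h u)) u) 1)"
    by (simp add: vmon_def)
  have "(dmon (vmon h C) :: ('c, 'k) poly) = (\<Sum>u\<in>C. Poly_Mapping.single (vmon h C - Poly_Mapping.single (dec h u, fert h u) 1 + Poly_Mapping.single (dec h u, Suc (fert h u)) 1) 1)"
    using dmon_sum[OF f, of "\<lambda>u. (dec h u, fert h u)", folded e] by simp
  also have "\<dots> = (\<Sum>u\<in>C. Poly_Mapping.single (vinc h C u) 1)"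
    by (intro sum.cong refl) (simp only: vinc_def vmon_minus[OF f])
  finally have "(dmon (vmon h C) :: ('c, 'k) poly) = (\<Sum>u\<in>C. Poly_Mapping.single (vinc h C u) 1)" .
  then show ?thesis unfolding tri_mm_def by (simp add: sum_distrib_left mult_single)
qed


lemma ins_poly_sum: "ins_poly Y (\<Sum>u\<in>C. Poly_Mapping.single (\<mu> u) (1::'k::field)) = (\<Sum>u\<in>C. bas (add_mset (\<mu> u) Y))"
  unfolding ins_poly_def by (simp add: lin_sum lin_single)

lemma tri_ms_comps:
  assumes S: "finite S" "\<And>C. C \<in> S \<Longrightarrow> finite C"
  shows "(tri_ms k1 (image_mset (vmon h) (mset_set S)) :: ('c, 'k::field) sym) =
    (\<Sum>C\<in>S. \<Sum>u\<in>C. bas (add_mset (k1 + vinc h C u) (image_mset (vmon h) (mset_set (S - {C})))))"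
proof -
  let ?K = "image_mset (vmon h) (mset_set S)"
  have "(tri_ms k1 ?K :: ('c, 'k) sym) = (\<Sum>C\<in>S. ins_poly (?K - {#vmon h C#}) (tri_mm k1 (vmon h C)))"
    unfolding tri_ms_def sum_unfold_sum_mset image_mset.compositionality o_def by (rule refl)
  also have "\<dots> = (\<Sum>C\<in>S. \<Sum>u\<in>C. bas (add_mset (k1 + vinc h C u) (image_mset (vmon h) (mset_set (S - {C})))))"
  proof (rule sum.cong[OF refl])
    fix C assume C: "C \<in> S"
    have "mset_set (S - {C}) = mset_set S - {#C#}" using mset_set_Diff[of S "{C}"] S C by simp
    moreover have "{#C#} \<subseteq># mset_set S" using S C by simp
    ultimately have "?K - {#vmon h C#} = image_mset (vmon h) (mset_set (S - {C}))"
      by (simp add: image_mset_Diff)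
    then show "ins_poly (?K - {#vmon h C#}) (tri_mm k1 (vmon h C)) =
      (\<Sum>u\<in>C. bas (add_mset (k1 + vinc h C u) (image_mset (vmon h) (mset_set (S - {C})))) :: ('c, 'k) sym)"
      by (simp add: tri_mm_vmon[OF S(2)[OF C]] ins_poly_sum)
  qed
  finally show ?thesis .
qed

lemma symmul_bas_left: "symmul (bas A) P = lin (\<lambda>B. bas (A + B)) P"
  unfolding symmul_def by (rule bilin_bas_left)

lemma symam_bas_right: "symam P (bas (B, k)) = lin (\<lambda>A. bas (A + B, k)) P"
  unfolding symam_def bilin_bas_right by simp

lemma symam_bas_left: "symam (bas A) Q = lin (\<lambda>(B, k). bas (A + B, k)) Q"
  unfolding symam_def by (rule bilin_bas_left)

lemma tri_aa_bas: "tri_aa (bas (Y1, k1)) (bas (Y2, k2)) =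
      symam (symmul (bas Y1) (tri_ms k1 Y2)) (bas ({#}, k2))
    + symam (bas (Y1 + Y2)) (lin (\<lambda>\<mu>. bas ({#}, \<mu>)) (tri_mm k1 k2))"
  unfolding tri_aa_def by simp

lemma tri_as_bas: "tri_as (bas (Y1, k1)) (bas Y2) = symmul (bas Y1) (tri_ms k1 Y2)"
  unfolding tri_as_def by simp

lemma anchor_basis:
  assumes ag: "is_atree g" and th: "targets_ok h"
  shows "(\<Sum>v<nv h. bas (phiA_gr (attach g h v)) :: ('c, 'k::field) sym) = tri_as (bas (phiAT_gr g)) (bas (phiA_gr h))"
proof -
  obtain Y1 k1 where p: "phiAT_gr g = (Y1, k1)" by fastforce
  have fin: "\<And>C. C \<in> comps h \<Longrightarrow> finite C" by (rule finite_comps_elem)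
  have "tri_as (bas (phiAT_gr g)) (bas (phiA_gr h)) =
     (\<Sum>C\<in>comps h. \<Sum>u\<in>C. bas (Y1 + add_mset (k1 + vinc h C u) (image_mset (vmon h) (mset_set (comps h - {C})))) :: ('c, 'k) sym)"
  proof -
    have e: "(tri_ms k1 (image_mset (vmon h) (mset_set (comps h))) :: ('c, 'k) sym) = (\<Sum>C\<in>comps h. \<Sum>u\<in>C. bas (add_mset (k1 + vinc h C u) (image_mset (vmon h) (mset_set (comps h - {C})))))"
      by (rule tri_ms_comps[OF finite_comps fin])
    show ?thesis unfolding p tri_as_bas symmul_bas_left phiA_gr_def e by (simp add: lin_sum)
  qed
  also have "\<dots> = (\<Sum>C\<in>comps h. \<Sum>v\<in>C. bas (phiA_gr (attach g h v)))"
  proof (intro sum.cong refl)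
    fix C v assume C: "C \<in> comps h" and v: "v \<in> C"
    have vl: "v < nv h" using comps_sub[OF C] v by blast
    have cv: "comp h v = C" using comps_in[OF C v] .
    show "bas (Y1 + add_mset (k1 + vinc h C v) (image_mset (vmon h) (mset_set (comps h - {C})))) = bas (phiA_gr (attach g h v))"
      using phiA_att[OF ag th vl] p cv by simp
  qed
  also have "\<dots> = (\<Sum>v<nv h. bas (phiA_gr (attach g h v)))" by (rule sum_comps[symmetric])
  finally show ?thesis ..
qed

lemma graft_basis:
  assumes ag: "is_atree g" and ah: "is_atree h"
  shows "(\<Sum>v<nv h. bas (phiAT_gr (attach g h v)) :: ('c, 'k::field) am) = tri_aa (bas (phiAT_gr g)) (bas (phiAT_gr h))"
proof -
  obtain Y1 k1 where p: "phiAT_gr g = (Y1, k1)" by fastforce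
  have th: "targets_ok h" using ah by (rule atree_targets)
  have rh: "root h < nv h" using atree_root[OF ah] by simp
  let ?Rh = "comp h (root h)"
  let ?S = "comps h - {?Rh}"
  let ?Y2 = "image_mset (vmon h) (mset_set ?S)"
  have Rh_in: "?Rh \<in> comps h" using rh by (rule comp_in_comps)
  have ph: "phiAT_gr h = (?Y2, vmon h ?Rh)" by (simp add: phiAT_gr_def)
  have finS: "finite ?S" by simp
  have fin: "\<And>C. C \<in> ?S \<Longrightarrow> finite C" using finite_comps_elem by blast
  have T1: "symam (symmul (bas Y1) (tri_ms k1 ?Y2)) (bas ({#}, vmon h ?Rh)) =
     (\<Sum>C\<in>?S. \<Sum>u\<in>C. bas (Y1 + add_mset (k1 + vinc h C u) (image_mset (vmon h) (mset_set (?S - {C}))), vmon h ?Rh) :: ('c, 'k) am)"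
  proof -
    have e: "(tri_ms k1 ?Y2 :: ('c, 'k) sym) = (\<Sum>C\<in>?S. \<Sum>u\<in>C. bas (add_mset (k1 + vinc h C u) (image_mset (vmon h) (mset_set (?S - {C})))))"
      by (rule tri_ms_comps[OF finS fin])
    show ?thesis unfolding e symmul_bas_left symam_bas_right by (simp add: lin_sum)
  qed
  have T2: "symam (bas (Y1 + ?Y2)) (lin (\<lambda>\<mu>. bas ({#}, \<mu>)) (tri_mm k1 (vmon h ?Rh))) =
     (\<Sum>u\<in>?Rh. bas (Y1 + ?Y2, k1 + vinc h ?Rh u) :: ('c, 'k) am)"
    unfolding tri_mm_vmon[OF finite_comp] symam_bas_left by (simp add: lin_sum lin_single)
  have "tri_aa (bas (phiAT_gr g)) (bas (phiAT_gr h)) =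
     (\<Sum>u\<in>?Rh. bas (Y1 + ?Y2, k1 + vinc h ?Rh u)) +
     (\<Sum>C\<in>?S. \<Sum>u\<in>C. bas (Y1 + add_mset (k1 + vinc h C u) (image_mset (vmon h) (mset_set (?S - {C}))), vmon h ?Rh) :: ('c, 'k) am)"
    unfolding p ph tri_aa_bas T1 T2 by (simp add: add.commute)
  also have "(\<Sum>u\<in>?Rh. bas (Y1 + ?Y2, k1 + vinc h ?Rh u)) = (\<Sum>v\<in>?Rh. bas (phiAT_gr (attach g h v)) :: ('c, 'k) am)"
  proof (rule sum.cong[OF refl])
    fix v assume v: "v \<in> ?Rh"
    have vl: "v < nv h" using comp_sub v by blast
    have cv: "comp h v = ?Rh" using comp_eq[OF v] .
    show "bas (Y1 + ?Y2, k1 + vinc h ?Rh v) = bas (phiAT_gr (attach g h v))"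
      using phiAT_att[OF ag ah vl] p ph cv by simp
  qed
  also have "(\<Sum>C\<in>?S. \<Sum>u\<in>C. bas (Y1 + add_mset (k1 + vinc h C u) (image_mset (vmon h) (mset_set (?S - {C}))), vmon h ?Rh)) =
     (\<Sum>C\<in>?S. \<Sum>v\<in>C. bas (phiAT_gr (attach g h v)) :: ('c, 'k) am)"
  proof (intro sum.cong refl)
    fix C v assume C: "C \<in> ?S" and v: "v \<in> C"
    have vl: "v < nv h" using comps_sub[of C h] C v by blast
    have cv: "comp h v = C" using comps_in[of C h v] C v by blast
    have ne: "C \<noteq> ?Rh" using C by blast
    show "bas (Y1 + add_mset (k1 + vinc h C v) (image_mset (vmon h) (mset_set (?S - {C}))), vmon h ?Rh) = bas (phiAT_gr (attach g h v))"
      using phiAT_att[OF ag ah vl] p ph cv ne by simp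
  qed
  also have "(\<Sum>v\<in>?Rh. bas (phiAT_gr (attach g h v))) + (\<Sum>C\<in>?S. \<Sum>v\<in>C. bas (phiAT_gr (attach g h v))) =
     (\<Sum>C\<in>comps h. \<Sum>v\<in>C. bas (phiAT_gr (attach g h v)) :: ('c, 'k) am)"
    by (rule sum.remove[OF finite_comps Rh_in, symmetric])
  also have "\<dots> = (\<Sum>v<nv h. bas (phiAT_gr (attach g h v)))" by (rule sum_comps[symmetric])
  finally show ?thesis ..
qed


theorem theorem3p6:
  fixes X Y a b :: "('c::finite) gcls \<Rightarrow>\<^sub>0 'k::field" and s :: 'k
  assumes "Poly_Mapping.keys X \<subseteq> ATcls" and "Poly_Mapping.keys Y \<subseteq> ATcls"
    and "Poly_Mapping.keys a \<subseteq> Acls" and "Poly_Mapping.keys b \<subseteq> Acls"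
  shows "PhiA (unitA :: 'c gcls \<Rightarrow>\<^sub>0 'k) = unitS
    \<and> PhiA (a + b) = PhiA a + PhiA b
    \<and> PhiA (smul s a) = smul s (PhiA a)
    \<and> PhiA (amul a b) = symmul (PhiA a) (PhiA b)
    \<and> PhiAT (graft X Y) = tri_aa (PhiAT X) (PhiAT Y)
    \<and> PhiAT (amul a X) = symam (PhiA a) (PhiAT X)
    \<and> PhiA (anchor X a) = tri_as (PhiAT X) (PhiA a)"
proof -
  have AT: "c \<in> ATcls \<Longrightarrow> is_atree (repr c)" for c by (simp add: ATcls_def)
  have AA: "c \<in> Acls \<Longrightarrow> is_multiaroma (repr c)" for c by (simp add: Acls_def)
  have MT: "is_multiaroma g \<Longrightarrow> targets_ok g" for g :: "'c gr" by (simp add: is_multiaroma_def)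
  have 1: "PhiA (unitA :: 'c gcls \<Rightarrow>\<^sub>0 'k) = unitS"
  proof -
    have t: "targets_ok (empty_gr :: 'c gr)" by (simp add: targets_ok_def empty_gr_def)
    have "phiA_gr (repr (cls (empty_gr :: 'c gr))) = {#}"
      using phiA_repr_cls[OF t] phiA_nv0[of "empty_gr :: 'c gr"] by (simp add: empty_gr_def)
    then show ?thesis by (simp add: PhiA_def unitA_def unitS_def)
  qed
  have 2: "PhiA (a + b) = PhiA a + PhiA b" by (simp add: PhiA_def lin_add)
  have 3: "PhiA (smul s a) = smul s (PhiA a)" by (simp add: PhiA_def lin_smul)
  have 4: "PhiA (amul a b) = symmul (PhiA a) (PhiA b)"
  proof -
    have "PhiA (amul a b) = bilin (\<lambda>c d. bas (phiA_gr (repr (cls (du (repr c) (repr d)))))) a b"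
      unfolding PhiA_def amul_def lin_bilin by simp
    also have "\<dots> = bilin (\<lambda>c d. bas (phiA_gr (repr c) + phiA_gr (repr d))) a b"
    proof (rule bilin_cong)
      fix c d assume c: "c \<in> Poly_Mapping.keys a" and d: "d \<in> Poly_Mapping.keys b"
      have tc: "targets_ok (repr c)" using c assms(3) AA MT by blast
      have td: "targets_ok (repr d)" using d assms(4) AA MT by blast
      show "bas (phiA_gr (repr (cls (du (repr c) (repr d))))) = (bas (phiA_gr (repr c) + phiA_gr (repr d)) :: ('c, 'k) sym)"
        using phiA_repr_cls[OF targets_du[OF tc td]] phiA_du[OF tc td] by simp
    qed
    also have "\<dots> = symmul (PhiA a) (PhiA b)"
      unfolding symmul_def PhiA_def bilin_lin_lin by simp
    finally show ?thesis .
  qed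
  have 5: "PhiAT (graft X Y) = tri_aa (PhiAT X) (PhiAT Y)"
  proof -
    have "PhiAT (graft X Y) = bilin (\<lambda>c d. lin (\<lambda>c. bas (phiAT_gr (repr c))) (graft_gr (repr c) (repr d))) X Y"
      unfolding PhiAT_def graft_def lin_bilin ..
    also have "\<dots> = bilin (\<lambda>c d. tri_aa (bas (phiAT_gr (repr c))) (bas (phiAT_gr (repr d)))) X Y"
    proof (rule bilin_cong)
      fix c d assume c: "c \<in> Poly_Mapping.keys X" and d: "d \<in> Poly_Mapping.keys Y"
      have ac: "is_atree (repr c)" using c assms(1) AT by blast
      have ad: "is_atree (repr d)" using d assms(2) AT by blast
      have "lin (\<lambda>c. bas (phiAT_gr (repr c))) (graft_gr (repr c) (repr d)) =
          (\<Sum>v<nv (repr d). bas (phiAT_gr (attach (repr c) (repr d) v)) :: ('c, 'k) am)"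
        unfolding graft_gr_def lin_sum lin_bas
        by (intro sum.cong refl) (simp add: phiAT_repr_cls root_att[OF ac ad])
      then show "lin (\<lambda>c. bas (phiAT_gr (repr c))) (graft_gr (repr c) (repr d)) =
          (tri_aa (bas (phiAT_gr (repr c))) (bas (phiAT_gr (repr d))) :: ('c, 'k) am)"
        using graft_basis[OF ac ad] by simp
    qed
    also have "\<dots> = tri_aa (PhiAT X) (PhiAT Y)"
      by (simp only: tri_aa_def PhiAT_def bilin_lin_lin)
    finally show ?thesis .
  qed
  have 6: "PhiAT (amul a X) = symam (PhiA a) (PhiAT X)"
  proof -
    have "PhiAT (amul a X) = bilin (\<lambda>c d. bas (phiAT_gr (repr (cls (du (repr c) (repr d)))))) a X"
      unfolding PhiAT_def amul_def lin_bilin by simp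
    also have "\<dots> = bilin (\<lambda>c d. bas (phiA_gr (repr c) + fst (phiAT_gr (repr d)), snd (phiAT_gr (repr d)))) a X"
    proof (rule bilin_cong)
      fix c d assume c: "c \<in> Poly_Mapping.keys a" and d: "d \<in> Poly_Mapping.keys X"
      have mc: "is_multiaroma (repr c)" using c assms(3) AA by blast
      have ad: "is_atree (repr d)" using d assms(1) AT by blast
      show "bas (phiAT_gr (repr (cls (du (repr c) (repr d))))) =
          (bas (phiA_gr (repr c) + fst (phiAT_gr (repr d)), snd (phiAT_gr (repr d))) :: ('c, 'k) am)"
        using phiAT_repr_cls[OF conjunct1[OF root_du[OF mc ad]]] phiAT_du[OF mc ad] by simp
    qed
    also have "\<dots> = symam (PhiA a) (PhiAT X)"
      unfolding symam_def PhiA_def PhiAT_def bilin_lin_lin by (simp add: case_prod_beta)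
    finally show ?thesis .
  qed
  have 7: "PhiA (anchor X a) = tri_as (PhiAT X) (PhiA a)"
  proof -
    have "PhiA (anchor X a) = bilin (\<lambda>c d. lin (\<lambda>c. bas (phiA_gr (repr c))) (graft_gr (repr c) (repr d))) X a"
      unfolding PhiA_def anchor_def lin_bilin ..
    also have "\<dots> = bilin (\<lambda>c d. tri_as (bas (phiAT_gr (repr c))) (bas (phiA_gr (repr d)))) X a"
    proof (rule bilin_cong)
      fix c d assume c: "c \<in> Poly_Mapping.keys X" and d: "d \<in> Poly_Mapping.keys a"
      have ac: "is_atree (repr c)" using c assms(1) AT by blast
      have td: "targets_ok (repr d)" using d assms(3) AA MT by blast
      have "lin (\<lambda>c. bas (phiA_gr (repr c))) (graft_gr (repr c) (repr d)) =
          (\<Sum>v<nv (repr d). bas (phiA_gr (attach (repr c) (repr d) v)) :: ('c, 'k) sym)"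
        unfolding graft_gr_def lin_sum lin_bas
        by (intro sum.cong refl) (simp add: phiA_repr_cls targets_att[OF ac td])
      then show "lin (\<lambda>c. bas (phiA_gr (repr c))) (graft_gr (repr c) (repr d)) =
          (tri_as (bas (phiAT_gr (repr c))) (bas (phiA_gr (repr d))) :: ('c, 'k) sym)"
        using anchor_basis[OF ac td] by simp
    qed
    also have "\<dots> = tri_as (PhiAT X) (PhiA a)"
      by (simp only: tri_as_def PhiAT_def PhiA_def bilin_lin_lin)
    finally show ?thesis .
  qed
  show ?thesis using 1 2 3 4 5 6 7 by blast
qed


end
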